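(* Let $R$ be a commutative ring which is free as an abelian group with $\mathbb{Z}$-basis $V=\{v_k\}_{k\in I}$, let $n\ge2$, $p$ a prime and $r\ge1$, and assume $p\ne2$ or $r>1$. Then the $p$-th power map $X\mapsto X^p$ induces a well-defined group isomorphism $$\psi^p_r:\Gamma(SL_n(R),p^r)/\Gamma(SL_n(R),p^{r+1})\longrightarrow\Gamma(SL_n(R),p^{r+1})/\Gamma(SL_n(R),p^{r+2}),$$ and $\psi^p_r(A_{ij,k,r})=A_{ij,k,r+1}$ for all $1\le i,j\le n$ with $i+j<2n$ and $k\in I$.
   Context: $\Gamma(SL_n(R),p^m)=\ker\big(SL_n(R)\to SL_n(R/p^mR)\big)$. For $m\ge1$ the quotient $\Gamma(SL_n(R),p^m)/\Gamma(SL_n(R),p^{m+1})$ is identified (via reduction mod $p^{m+1}$) with the kernel of $SL_n(R/p^{m+1}R)\to SL_n(R/p^mR)$, and in it $A_{ij,k,m}$ denotes the reduction mod $p^{m+1}$ of $1+p^mv_ke_{ij}$ if $i\ne j$ and of $1+p^mv_k(e_{ii}-e_{nn})$ if $i=j$, where $e_{ij}$ is the matrix unit with $1$ in position $(i,j)$. *)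

theory Defs
  imports "Jordan_Normal_Form.Determinant" "HOL-Algebra.Coset"
begin

text \<open>R is free as an abelian group with Z-basis v indexed by the type 'i (the index set I is UNIV):
  every element is uniquely a finite Z-linear combination of the v k.\<close>
definition free_Z_basis :: "('i \<Rightarrow> 'a::comm_ring_1) \<Rightarrow> bool" where
  "free_Z_basis v \<longleftrightarrow>
     (\<forall>x::'a. \<exists>!c::'i \<Rightarrow> int. finite {k. c k \<noteq> 0} \<and>
        x = (\<Sum>k\<in>{k. c k \<noteq> 0}. of_int (c k) * v k))"

definition mat_cong :: "'a::comm_ring_1 mat \<Rightarrow> 'a mat \<Rightarrow> nat \<Rightarrow> bool" where
  "mat_cong A B m \<longleftrightarrow> (\<forall>i<dim_row A. \<forall>j<dim_col A. of_nat m dvd (A $$ (i,j) - B $$ (i,j)))"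

definition SL :: "nat \<Rightarrow> 'a::comm_ring_1 mat set" where
  "SL n = {A \<in> carrier_mat n n. det A = 1}"

definition Gamma :: "nat \<Rightarrow> nat \<Rightarrow> 'a::comm_ring_1 mat set" where
  "Gamma n m = {A \<in> SL n. mat_cong A (1\<^sub>m n) m}"

definition Gamma_group :: "nat \<Rightarrow> nat \<Rightarrow> 'a::comm_ring_1 mat monoid" where
  "Gamma_group n m = \<lparr>carrier = Gamma n m, mult = (\<lambda>A B. A * B), one = 1\<^sub>m n\<rparr>"

definition Gamma_quot :: "nat \<Rightarrow> nat \<Rightarrow> nat \<Rightarrow> 'a::comm_ring_1 mat set monoid" where
  "Gamma_quot n p m = Gamma_group n (p ^ m) Mod Gamma n (p ^ (m + 1))"

definition unit_mat :: "nat \<Rightarrow> nat \<Rightarrow> nat \<Rightarrow> 'a::comm_ring_1 mat" where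
  "unit_mat n i j = mat n n (\<lambda>(a,b). if a = i \<and> b = j then 1 else 0)"

text \<open>The matrix 1 + p^m v_k e_ij (i /= j), resp. 1 + p^m v_k (e_ii - e_nn) (i = j),
  with 0-based indices, so e_nn is unit_mat n (n-1) (n-1).\<close>
definition A_mat :: "nat \<Rightarrow> nat \<Rightarrow> ('i \<Rightarrow> 'a::comm_ring_1) \<Rightarrow> nat \<Rightarrow> nat \<Rightarrow> 'i \<Rightarrow> nat \<Rightarrow> 'a mat" where
  "A_mat n p v i j k m =
     (if i \<noteq> j then 1\<^sub>m n + (of_nat (p ^ m) * v k) \<cdot>\<^sub>m unit_mat n i j
      else 1\<^sub>m n + (of_nat (p ^ m) * v k) \<cdot>\<^sub>m (unit_mat n i i - unit_mat n (n-1) (n-1)))"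

text \<open>A_{ij,k,m} as an element of Gamma(p^m)/Gamma(p^(m+1)): under the identification with the
  kernel of SL_n(R/p^(m+1)) -> SL_n(R/p^m), it is the class of all X in Gamma(p^m) reducing
  mod p^(m+1) to A_mat.\<close>
definition A_elem :: "nat \<Rightarrow> nat \<Rightarrow> ('i \<Rightarrow> 'a::comm_ring_1) \<Rightarrow> nat \<Rightarrow> nat \<Rightarrow> 'i \<Rightarrow> nat \<Rightarrow> 'a mat set" where
  "A_elem n p v i j k m = {X \<in> Gamma n (p ^ m). mat_cong X (A_mat n p v i j k m) (p ^ (m + 1))}"

end

theory Submission
  imports Defs
begin


lemma of_nat_dvd_mono: "(N::nat) dvd N' \<Longrightarrow> (of_nat N :: 'a::comm_semiring_1) dvd of_nat N'"
  by (metis dvd_def of_nat_mult)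

lemma mat_cong_iff:
  assumes "A \<in> carrier_mat n n" "B \<in> carrier_mat n n"
  shows "mat_cong A B N \<longleftrightarrow> (\<forall>i<n. \<forall>j<n. of_nat N dvd (A $$ (i,j) - B $$ (i,j)))"
  using assms unfolding mat_cong_def by auto

lemma mc_refl: "mat_cong A A N"
  unfolding mat_cong_def by auto

lemma mc_sym:
  assumes "A \<in> carrier_mat n n" "B \<in> carrier_mat n n" "mat_cong A B N"
  shows "mat_cong B A N"
  using assms unfolding mat_cong_def
  by (metis carrier_matD dvd_minus_iff minus_diff_eq)

lemma mc_trans:
  assumes "A \<in> carrier_mat n n" "B \<in> carrier_mat n n" "mat_cong A B N" "mat_cong B C N"
  shows "mat_cong A C N"
proof -
  { fix i j assume ij: "i < n" "j < n"
    have "of_nat N dvd (A $$ (i,j) - B $$ (i,j)) + (B $$ (i,j) - C $$ (i,j))"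
      using assms ij unfolding mat_cong_def by (intro dvd_add) auto
    hence "of_nat N dvd (A $$ (i,j) - C $$ (i,j))" by simp }
  thus ?thesis using assms unfolding mat_cong_def by auto
qed

lemma mc_mono:
  assumes "mat_cong A B N'" "N dvd N'"
  shows "mat_cong A B N"
  using assms unfolding mat_cong_def
  by (meson dvd_trans of_nat_dvd_mono)

lemma mc_add:
  assumes "A \<in> carrier_mat n n" "B \<in> carrier_mat n n" "A' \<in> carrier_mat n n" "B' \<in> carrier_mat n n"
    "mat_cong A A' N" "mat_cong B B' N"
  shows "mat_cong (A + B) (A' + B') N"
proof -
  { fix i j assume ij: "i < n" "j < n"
    have "of_nat N dvd (A $$ (i,j) - A' $$ (i,j)) + (B $$ (i,j) - B' $$ (i,j))"
      using assms ij unfolding mat_cong_def by (intro dvd_add) auto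
    hence "of_nat N dvd ((A + B) $$ (i,j) - (A' + B') $$ (i,j))" using assms ij
      by (simp add: algebra_simps) }
  thus ?thesis using assms unfolding mat_cong_def by auto
qed

lemma mc_minus:
  assumes "A \<in> carrier_mat n n" "B \<in> carrier_mat n n" "A' \<in> carrier_mat n n" "B' \<in> carrier_mat n n"
    "mat_cong A A' N" "mat_cong B B' N"
  shows "mat_cong (A - B) (A' - B') N"
proof -
  { fix i j assume ij: "i < n" "j < n"
    have "of_nat N dvd (A $$ (i,j) - A' $$ (i,j)) - (B $$ (i,j) - B' $$ (i,j))"
      using assms ij unfolding mat_cong_def by (metis carrier_matD dvd_diff)
    hence "of_nat N dvd ((A - B) $$ (i,j) - (A' - B') $$ (i,j))" using assms ij
      by (simp add: algebra_simps) }
  thus ?thesis using assms unfolding mat_cong_def by auto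
qed

lemma mc_smult:
  assumes "A \<in> carrier_mat n n" "A' \<in> carrier_mat n n" "mat_cong A A' N"
  shows "mat_cong (c \<cdot>\<^sub>m A) (c \<cdot>\<^sub>m A') N"
proof -
  { fix i j assume ij: "i < n" "j < n"
    have "of_nat N dvd c * (A $$ (i,j) - A' $$ (i,j))"
      using assms ij unfolding mat_cong_def by (intro dvd_mult) auto
    hence "of_nat N dvd ((c \<cdot>\<^sub>m A) $$ (i,j) - (c \<cdot>\<^sub>m A') $$ (i,j))" using assms ij
      by (simp add: algebra_simps) }
  thus ?thesis using assms unfolding mat_cong_def by auto
qed

lemma mc_mult:
  assumes "A \<in> carrier_mat n n" "B \<in> carrier_mat n n" "A' \<in> carrier_mat n n" "B' \<in> carrier_mat n n"
    "mat_cong A A' N" "mat_cong B B' N"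
  shows "mat_cong (A * B) (A' * B') N"
proof -
  { fix i j assume ij: "i < n" "j < n"
    have "(A * B) $$ (i,j) - (A' * B') $$ (i,j) =
       (\<Sum>k<n. (A $$ (i,k) - A' $$ (i,k)) * B $$ (k,j) + A' $$ (i,k) * (B $$ (k,j) - B' $$ (k,j)))"
      using assms ij
      by (simp add: scalar_prod_def sum_subtractf[symmetric] algebra_simps atLeast0LessThan)
    also have "of_nat N dvd \<dots>"
      using assms ij unfolding mat_cong_def
      by (intro dvd_sum dvd_add dvd_mult dvd_mult2) auto
    finally have "of_nat N dvd ((A * B) $$ (i,j) - (A' * B') $$ (i,j))" . }
  thus ?thesis using assms unfolding mat_cong_def by auto
qed

lemma mc_pow:
  assumes "A \<in> carrier_mat n n" "A' \<in> carrier_mat n n" "mat_cong A A' N"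
  shows "mat_cong (A ^\<^sub>m k) (A' ^\<^sub>m k) N"
proof (induction k)
  case 0 show ?case using assms by (simp add: mc_refl)
next
  case (Suc k) thus ?case using assms by (simp add: mc_mult[of _ n])
qed

definition dvdm :: "nat \<Rightarrow> 'a::comm_ring_1 mat \<Rightarrow> bool" where
  "dvdm N M \<longleftrightarrow> (\<forall>i<dim_row M. \<forall>j<dim_col M. of_nat N dvd M $$ (i,j))"

lemma mc_dvdm:
  assumes "A \<in> carrier_mat n n" "B \<in> carrier_mat n n"
  shows "mat_cong A B N \<longleftrightarrow> dvdm N (A - B)"
  using assms unfolding mat_cong_def dvdm_def by auto

lemma mc_plus_dvdm:
  assumes "A \<in> carrier_mat n n" "D \<in> carrier_mat n n"
  shows "mat_cong (A + D) A N \<longleftrightarrow> dvdm N D"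
  using assms unfolding mat_cong_def dvdm_def by auto

lemma dvdm_mono: "dvdm N' A \<Longrightarrow> N dvd N' \<Longrightarrow> dvdm N A"
  unfolding dvdm_def by (meson dvd_trans of_nat_dvd_mono)

lemma dvdm_add: "A \<in> carrier_mat n n \<Longrightarrow> B \<in> carrier_mat n n \<Longrightarrow> dvdm N A \<Longrightarrow> dvdm N B \<Longrightarrow> dvdm N (A + B)"
  unfolding dvdm_def by auto

lemma dvdm_minus: "A \<in> carrier_mat n n \<Longrightarrow> B \<in> carrier_mat n n \<Longrightarrow> dvdm N A \<Longrightarrow> dvdm N B \<Longrightarrow> dvdm N (A - B)"
  unfolding dvdm_def by auto

lemma dvdm_uminus: "dvdm N A \<Longrightarrow> dvdm N (- A)"
  unfolding dvdm_def by auto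

lemma dvdm_zero: "dvdm N (0\<^sub>m n m)"
  unfolding dvdm_def by auto

lemma dvdm_smult: "dvdm N A \<Longrightarrow> dvdm N (c \<cdot>\<^sub>m A)"
  unfolding dvdm_def by auto

lemma dvdm_smult2: "of_nat N dvd c \<Longrightarrow> dvdm N (c \<cdot>\<^sub>m A)"
  unfolding dvdm_def by auto

lemma dvdm_smult3: "dvdm N A \<Longrightarrow> dvdm (M * N) (of_nat M * c \<cdot>\<^sub>m A)"
  unfolding dvdm_def by (auto simp: mult_dvd_mono)

lemma dvdm_mult:
  assumes "A \<in> carrier_mat n n" "B \<in> carrier_mat n n" "dvdm a A" "dvdm b B"
  shows "dvdm (a * b) (A * B)"
  unfolding dvdm_def
proof (intro allI impI)
  fix i j assume "i < dim_row (A * B)" "j < dim_col (A * B)"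
  thus "of_nat (a * b) dvd (A * B) $$ (i, j)"
    using assms unfolding dvdm_def
    by (auto simp: scalar_prod_def intro!: dvd_sum mult_dvd_mono)
qed

lemma dvdm_mult_left:
  assumes "A \<in> carrier_mat n n" "B \<in> carrier_mat n n" "dvdm b B"
  shows "dvdm b (A * B)"
  using dvdm_mult[OF assms(1,2) _ assms(3), of 1] by (simp add: dvdm_def)

lemma dvdm_mult_right:
  assumes "A \<in> carrier_mat n n" "B \<in> carrier_mat n n" "dvdm a A"
  shows "dvdm a (A * B)"
  using dvdm_mult[OF assms(1,2) assms(3), of 1] by (simp add: dvdm_def)

lemma det_pow: "A \<in> carrier_mat n n \<Longrightarrow> det (A ^\<^sub>m k) = det A ^ k"
  by (induction k) (auto simp: det_mult[of _ n])



lemma prod_cong_dvd: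
  fixes f g :: "'b \<Rightarrow> 'a::comm_ring_1"
  assumes "finite S" "\<And>i. i \<in> S \<Longrightarrow> c dvd f i - g i"
  shows "c dvd prod f S - prod g S"
  using assms
proof (induction S rule: finite_induct)
  case empty then show ?case by simp
next
  case (insert a S)
  have "prod f (insert a S) - prod g (insert a S) = (f a - g a) * prod f S + g a * (prod f S - prod g S)"
    using insert by (simp add: algebra_simps)
  also have "c dvd \<dots>" using insert by (intro dvd_add dvd_mult dvd_mult2) auto
  finally show ?case .
qed

lemma det_cong:
  assumes A: "A \<in> carrier_mat n n" and B: "B \<in> carrier_mat n n" and c: "mat_cong A B N"
  shows "of_nat N dvd det A - det B"
proof -
  have "det A - det B = (\<Sum>p | p permutes {0..<n}. of_int (sign p) *
     ((\<Prod>i = 0..<n. A $$ (i, p i)) - (\<Prod>i = 0..<n. B $$ (i, p i))))"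
    unfolding det_def'[OF A] det_def'[OF B] by (simp only: sum_subtractf[symmetric] right_diff_distrib)
  also have "of_nat N dvd \<dots>"
  proof (intro dvd_sum dvd_mult prod_cong_dvd)
    fix p i assume "p \<in> {p. p permutes {0..<n}}" "i \<in> {0..<n}"
    hence "p i < n" "i < n" by (auto simp: permutes_in_image)
    thus "of_nat N dvd A $$ (i, p i) - B $$ (i, p i)" using c A B unfolding mat_cong_def by auto
  qed auto
  finally show ?thesis .
qed

lemma ex1_same: "\<exists>!x. P x \<Longrightarrow> P a \<Longrightarrow> P b \<Longrightarrow> a = b"
  by blast

lemma free_torsion:
  assumes fb: "free_Z_basis (v :: 'i \<Rightarrow> 'a::comm_ring_1)" and m: "m \<noteq> 0" and x: "of_nat m * x = (0::'a)"
  shows "x = 0"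
proof -
  define P where "P = (\<lambda>y::'a. \<lambda>c::'i \<Rightarrow> int. finite {k. c k \<noteq> 0} \<and> y = (\<Sum>k\<in>{k. c k \<noteq> 0}. of_int (c k) * v k))"
  have ex: "\<And>y. \<exists>!c. P y c" using fb unfolding free_Z_basis_def P_def by blast
  from ex[of x] obtain c where c: "P x c" by blast
  define c' where "c' = (\<lambda>k. int m * c k)"
  have S: "{k. c' k \<noteq> 0} = {k. c k \<noteq> 0}" using m by (auto simp: c'_def)
  have "of_nat m * x = (\<Sum>k\<in>{k. c k \<noteq> 0}. of_nat m * (of_int (c k) * v k))"
    using c unfolding P_def by (simp add: sum_distrib_left)
  also have "\<dots> = (\<Sum>k\<in>{k. c' k \<noteq> 0}. of_int (c' k) * v k)"
    unfolding S by (intro sum.cong) (auto simp: c'_def)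
  finally have r1: "P 0 c'" using c x S unfolding P_def by simp
  have r2: "P 0 (\<lambda>k. 0)" unfolding P_def by simp
  have "c' = (\<lambda>k. 0)" using ex1_same[of "P 0", OF ex[of 0] r1 r2] .
  hence "\<forall>k. c k = 0" using m by (auto simp: c'_def fun_eq_iff)
  thus ?thesis using c unfolding P_def by simp
qed

lemma free_cancel:
  assumes fb: "free_Z_basis (v :: 'i \<Rightarrow> 'a::comm_ring_1)" and a: "a \<noteq> 0"
    and d: "(of_nat (a * b) :: 'a) dvd of_nat a * x"
  shows "of_nat b dvd x"
proof -
  from d obtain y where "of_nat a * x = of_nat (a * b) * y" by (auto simp: dvd_def)
  hence "of_nat a * (x - of_nat b * y) = (0::'a)" by (simp add: algebra_simps)
  hence "x - of_nat b * y = 0" using free_torsion[OF fb a] by blast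
  thus ?thesis by (metis dvd_triv_left eq_iff_diff_eq_0)
qed

lemma free_cancel_pow:
  assumes fb: "free_Z_basis (v :: 'i \<Rightarrow> 'a::comm_ring_1)" and p: "p \<noteq> 0"
    and d: "(of_nat (p ^ (r + 1)) :: 'a) dvd of_nat (p ^ r) * x"
  shows "of_nat p dvd x"
  using free_cancel[OF fb _, of "p ^ r" p x] d p by (simp add: mult.commute)

lemma SL_mult: "A \<in> SL n \<Longrightarrow> B \<in> SL n \<Longrightarrow> A * B \<in> SL n"
  unfolding SL_def by (auto simp: det_mult)

lemma SL_one: "1\<^sub>m n \<in> SL n"
  unfolding SL_def by auto

lemma SL_adj: assumes "A \<in> SL n" shows "adj_mat A \<in> SL n" "adj_mat A * A = 1\<^sub>m n" "A * adj_mat A = 1\<^sub>m n"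
proof -
  have A: "A \<in> carrier_mat n n" "det A = 1" using assms by (auto simp: SL_def)
  show 2: "adj_mat A * A = 1\<^sub>m n" "A * adj_mat A = 1\<^sub>m n" using adj_mat[OF A(1)] A by auto
  have "det (adj_mat A * A) = 1" using 2 by simp
  hence "det (adj_mat A) = 1" using det_mult[OF adj_mat(1)[OF A(1)] A(1)] A by simp
  thus "adj_mat A \<in> SL n" using adj_mat(1)[OF A(1)] by (simp add: SL_def)
qed

lemma SL_carrier: "A \<in> SL n \<Longrightarrow> A \<in> carrier_mat n n"
  unfolding SL_def by auto

lemma SL_pow: "A \<in> SL n \<Longrightarrow> A ^\<^sub>m k \<in> SL n"
  unfolding SL_def by (auto simp: det_pow)

lemma Gamma_mult: "A \<in> Gamma n N \<Longrightarrow> B \<in> Gamma n N \<Longrightarrow> A * B \<in> Gamma n N"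
  unfolding Gamma_def using SL_mult mc_mult[of A n B "1\<^sub>m n" "1\<^sub>m n" N]
  by (auto simp: SL_def)

lemma Gamma_one: "1\<^sub>m n \<in> Gamma n N"
  unfolding Gamma_def by (auto simp: SL_one mc_refl)

lemma Gamma_adj: assumes "A \<in> Gamma n N" shows "adj_mat A \<in> Gamma n N"
proof -
  have A: "A \<in> SL n" "mat_cong A (1\<^sub>m n) N" using assms by (auto simp: Gamma_def)
  note C = SL_carrier[OF A(1)] SL_carrier[OF SL_adj(1)[OF A(1)]]
  have "mat_cong (adj_mat A * 1\<^sub>m n) (adj_mat A * A) N"
    using C mc_sym[OF C(1) _ A(2)] by (intro mc_mult[of _ n]) (auto simp: mc_refl)
  hence "mat_cong (adj_mat A) (1\<^sub>m n) N" using SL_adj[OF A(1)] C by simp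
  thus ?thesis using SL_adj[OF A(1)] by (simp add: Gamma_def)
qed

lemma Gamma_SL: "A \<in> Gamma n N \<Longrightarrow> A \<in> SL n"
  unfolding Gamma_def by auto

lemma Gamma_carrier: "A \<in> Gamma n N \<Longrightarrow> A \<in> carrier_mat n n"
  unfolding Gamma_def SL_def by auto

lemma Gamma_group: "group (Gamma_group n N :: 'a::comm_ring_1 mat monoid)"
proof (rule groupI)
  show "\<one>\<^bsub>Gamma_group n N\<^esub> \<in> carrier (Gamma_group n N)"
    by (simp add: Gamma_group_def Gamma_one)
next
  fix x y assume "x \<in> carrier (Gamma_group n N :: 'a mat monoid)" "y \<in> carrier (Gamma_group n N :: 'a mat monoid)"
  thus "x \<otimes>\<^bsub>Gamma_group n N\<^esub> y \<in> carrier (Gamma_group n N)"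
    by (simp add: Gamma_group_def Gamma_mult)
next
  fix x y z assume "x \<in> carrier (Gamma_group n N :: 'a mat monoid)" "y \<in> carrier (Gamma_group n N :: 'a mat monoid)"
    "z \<in> carrier (Gamma_group n N :: 'a mat monoid)"
  thus "x \<otimes>\<^bsub>Gamma_group n N\<^esub> y \<otimes>\<^bsub>Gamma_group n N\<^esub> z = x \<otimes>\<^bsub>Gamma_group n N\<^esub> (y \<otimes>\<^bsub>Gamma_group n N\<^esub> z)"
    by (simp add: Gamma_group_def assoc_mult_mat[of _ n n _ n _ n] Gamma_carrier)
next
  fix x assume "x \<in> carrier (Gamma_group n N :: 'a mat monoid)"
  thus "\<one>\<^bsub>Gamma_group n N\<^esub> \<otimes>\<^bsub>Gamma_group n N\<^esub> x = x"
    by (simp add: Gamma_group_def Gamma_carrier left_mult_one_mat[of _ n n])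
next
  fix x assume "x \<in> carrier (Gamma_group n N :: 'a mat monoid)"
  thus "\<exists>y\<in>carrier (Gamma_group n N). y \<otimes>\<^bsub>Gamma_group n N\<^esub> x = \<one>\<^bsub>Gamma_group n N\<^esub>"
    by (auto simp: Gamma_group_def intro!: bexI[of _ "adj_mat x"] Gamma_adj SL_adj Gamma_SL)
qed

lemma Gamma_inv: assumes "A \<in> Gamma n N" shows "inv\<^bsub>Gamma_group n N\<^esub> A = adj_mat A"
proof -
  interpret group "Gamma_group n N" by (rule Gamma_group)
  show ?thesis using assms
    by (intro inv_equality) (auto simp: Gamma_group_def Gamma_adj SL_adj Gamma_SL)
qed

lemma Gamma_sub: "N dvd N' \<Longrightarrow> Gamma n N' \<subseteq> Gamma n N"
  unfolding Gamma_def using mc_mono by blast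

lemma Gamma_normal:
  assumes "N dvd N'"
  shows "Gamma n N' \<lhd> (Gamma_group n N :: 'a::comm_ring_1 mat monoid)"
proof -
  interpret group "Gamma_group n N :: 'a mat monoid" by (rule Gamma_group)
  have sub: "subgroup (Gamma n N') (Gamma_group n N :: 'a mat monoid)"
  proof (rule subgroupI)
    show "Gamma n N' \<subseteq> carrier (Gamma_group n N :: 'a mat monoid)"
      using Gamma_sub[OF assms] by (simp add: Gamma_group_def)
    show "Gamma n N' \<noteq> {}" using Gamma_one by blast
    fix a assume "a \<in> (Gamma n N' :: 'a mat set)"
    thus "inv\<^bsub>Gamma_group n N\<^esub> a \<in> Gamma n N'"
      using Gamma_inv[of a n N] Gamma_sub[OF assms, of n] Gamma_adj[of a n N'] by auto
  next
    fix a b assume "a \<in> (Gamma n N' :: 'a mat set)" "b \<in> (Gamma n N' :: 'a mat set)"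
    thus "a \<otimes>\<^bsub>Gamma_group n N\<^esub> b \<in> Gamma n N'" by (simp add: Gamma_group_def Gamma_mult)
  qed
  { fix x h assume x: "x \<in> carrier (Gamma_group n N :: 'a mat monoid)" and h: "h \<in> (Gamma n N' :: 'a mat set)"
    have xG: "x \<in> Gamma n N" using x by (simp add: Gamma_group_def)
    note C = Gamma_carrier[OF xG] Gamma_carrier[OF h] Gamma_carrier[OF Gamma_adj[OF xG]]
    have hc: "mat_cong h (1\<^sub>m n) N'" using h by (simp add: Gamma_def)
    have "mat_cong (x * h * adj_mat x) (x * 1\<^sub>m n * adj_mat x) N'"
      using C hc by (intro mc_mult[of _ n] mc_refl) auto
    hence c1: "mat_cong (x * h * adj_mat x) (1\<^sub>m n) N'" using C SL_adj[OF Gamma_SL[OF xG]] by simp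
    have "x * h * adj_mat x \<in> SL n"
      using SL_mult SL_adj Gamma_SL xG h by metis
    hence "x \<otimes>\<^bsub>Gamma_group n N\<^esub> h \<otimes>\<^bsub>Gamma_group n N\<^esub> inv\<^bsub>Gamma_group n N\<^esub> x \<in> Gamma n N'"
      using c1 Gamma_inv[OF xG] by (simp add: Gamma_group_def Gamma_def) }
  thus ?thesis using sub normal_inv_iff by blast
qed

lemma Gamma_coset:
  assumes X: "X \<in> SL n"
  shows "Gamma n N' #>\<^bsub>Gamma_group n N\<^esub> X = {Y \<in> SL n. mat_cong Y X N'}"
proof (intro equalityI subsetI)
  fix Y assume "Y \<in> Gamma n N' #>\<^bsub>Gamma_group n N\<^esub> X"
  then obtain h where h: "h \<in> Gamma n N'" "Y = h * X" by (auto simp: r_coset_def Gamma_group_def)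
  have "mat_cong (h * X) (1\<^sub>m n * X) N'"
    using h X by (intro mc_mult[of _ n] mc_refl) (auto simp: Gamma_def SL_def)
  moreover have "h * X \<in> SL n" using h X SL_mult Gamma_SL by blast
  ultimately show "Y \<in> {Y \<in> SL n. mat_cong Y X N'}" using h X SL_carrier[OF X] by auto
next
  fix Y assume Y: "Y \<in> {Y \<in> SL n. mat_cong Y X N'}"
  note C = SL_carrier[OF X] SL_carrier[OF SL_adj(1)[OF X]]
  have Yc: "Y \<in> carrier_mat n n" using Y SL_carrier by auto
  define h where "h = Y * adj_mat X"
  have "mat_cong h (X * adj_mat X) N'" unfolding h_def
    using Y C Yc by (intro mc_mult[of _ n] mc_refl) auto
  hence "h \<in> Gamma n N'" using SL_adj[OF X] SL_mult[OF _ SL_adj(1)[OF X], of Y] Y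
    by (simp add: Gamma_def h_def)
  moreover have "h * X = Y" unfolding h_def using Yc C SL_adj[OF X] by simp
  ultimately show "Y \<in> Gamma n N' #>\<^bsub>Gamma_group n N\<^esub> X"
    by (auto simp: r_coset_def Gamma_group_def)
qed



declare minus_carrier_mat[simp]

lemma mult_expand1:
  fixes A :: "'a::comm_ring_1 mat"
  assumes "A \<in> carrier_mat n n" "D \<in> carrier_mat n n"
  shows "A * (1\<^sub>m n + D) = A + A * D"
  using mult_add_distrib_mat[OF assms(1) one_carrier_mat assms(2)] right_mult_one_mat[OF assms(1)] by simp

lemma pow_expand:
  fixes D :: "'a::comm_ring_1 mat"
  assumes D: "D \<in> carrier_mat n n" and dq: "dvdm q D"
  shows "mat_cong ((1\<^sub>m n + D) ^\<^sub>m k)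
           (1\<^sub>m n + of_nat k \<cdot>\<^sub>m D + of_nat (k choose 2) \<cdot>\<^sub>m (D * D)) (q ^ 3)"
proof (induction k)
  case 0
  show ?case using D by (auto simp: mat_cong_def choose_two)
next
  case (Suc k)
  define S where "S = 1\<^sub>m n + of_nat k \<cdot>\<^sub>m D + of_nat (k choose 2) \<cdot>\<^sub>m (D * D)"
  have Sc: "S \<in> carrier_mat n n" using D by (simp add: S_def)
  have "(1\<^sub>m n + D) ^\<^sub>m Suc k = (1\<^sub>m n + D) ^\<^sub>m k * (1\<^sub>m n + D)" by simp
  have c1: "mat_cong ((1\<^sub>m n + D) ^\<^sub>m Suc k) (S * (1\<^sub>m n + D)) (q ^ 3)"
    using Suc D Sc unfolding S_def[symmetric] by (simp add: mc_mult[of _ n] mc_refl)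
  have e1: "S * (1\<^sub>m n + D) = S + S * D" using mult_expand1[OF Sc D] .
  have e2: "S * D = D + of_nat k \<cdot>\<^sub>m (D * D) + of_nat (k choose 2) \<cdot>\<^sub>m (D * D * D)"
    unfolding S_def using D
    by (simp add: add_mult_distrib_mat[of _ n n] mult_smult_assoc_mat[of _ n n])
  define T where "T = 1\<^sub>m n + of_nat (Suc k) \<cdot>\<^sub>m D + of_nat (Suc k choose 2) \<cdot>\<^sub>m (D * D)"
  have ch: "Suc k choose 2 = k + (k choose 2)"
    using binomial_Suc_Suc[of k 1] by (simp add: numeral_2_eq_2)
  have e3: "S * (1\<^sub>m n + D) = T + of_nat (k choose 2) \<cdot>\<^sub>m (D * D * D)"
    unfolding e1 e2 unfolding T_def S_def ch
    by (rule eq_matI) (insert carrier_matD[OF D], auto simp del: index_mult_mat(1) assoc_mult_mat simp: algebra_simps)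
  have dv: "dvdm (q ^ 3) (D * D * D)"
  proof -
    have "dvdm (q * q) (D * D)" using dvdm_mult[OF D D dq dq] .
    hence "dvdm (q * q * q) (D * D * D)" using dvdm_mult[OF _ D _ dq, of "D * D"] D by auto
    thus ?thesis by (simp add: power3_eq_cube)
  qed
  have Tc: "T \<in> carrier_mat n n" using D by (simp add: T_def)
  have "mat_cong (S * (1\<^sub>m n + D)) T (q ^ 3)"
    unfolding e3 using mc_plus_dvdm[OF Tc, of "of_nat (k choose 2) \<cdot>\<^sub>m (D * D * D)"] D dv
    by (simp add: dvdm_smult)
  moreover have "(1\<^sub>m n + D) ^\<^sub>m Suc k \<in> carrier_mat n n" "S * (1\<^sub>m n + D) \<in> carrier_mat n n"
    using D Sc by auto
  ultimately show ?case unfolding T_def[symmetric]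
    using mc_trans[OF _ _ c1] by blast
qed

lemma X_as_1D:
  fixes X :: "'a::comm_ring_1 mat"
  assumes "X \<in> carrier_mat n n"
  shows "X = 1\<^sub>m n + (X - 1\<^sub>m n)"
  by (rule eq_matI) (insert assms, auto)

lemma pow_lin:
  fixes X :: "'a::comm_ring_1 mat"
  assumes X: "X \<in> carrier_mat n n" and c: "mat_cong X (1\<^sub>m n) (p ^ r)"
    and p: "prime p" and r: "r \<ge> 1" and pr: "p \<noteq> 2 \<or> r > 1"
  shows "mat_cong (X ^\<^sub>m p) (1\<^sub>m n + of_nat p \<cdot>\<^sub>m (X - 1\<^sub>m n)) (p ^ (r + 2))"
proof -
  define D where "D = X - 1\<^sub>m n"
  have D: "D \<in> carrier_mat n n" using X by (simp add: D_def)
  have dq: "dvdm (p ^ r) D" using c X unfolding D_def by (simp add: mc_dvdm[of _ n])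
  have XD: "X = 1\<^sub>m n + D" unfolding D_def by (rule X_as_1D[OF X])
  have c1: "mat_cong (X ^\<^sub>m p) (1\<^sub>m n + of_nat p \<cdot>\<^sub>m D + of_nat (p choose 2) \<cdot>\<^sub>m (D * D)) (p ^ (r + 2))"
  proof -
    have "mat_cong (X ^\<^sub>m p) (1\<^sub>m n + of_nat p \<cdot>\<^sub>m D + of_nat (p choose 2) \<cdot>\<^sub>m (D * D)) ((p ^ r) ^ 3)"
      unfolding XD by (rule pow_expand[OF D dq])
    moreover have "p ^ (r + 2) dvd (p ^ r) ^ 3"
      unfolding power_mult[symmetric] using r by (intro le_imp_power_dvd) auto
    ultimately show ?thesis by (rule mc_mono)
  qed
  have dd: "dvdm (p ^ r * p ^ r) (D * D)" by (rule dvdm_mult[OF D D dq dq])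
  have d2: "dvdm (p ^ (r + 2)) (of_nat (p choose 2) \<cdot>\<^sub>m (D * D))"
  proof (cases "p = 2")
    case True
    hence "r > 1" using pr by auto
    have "p ^ (r + 2) dvd p ^ r * p ^ r"
      unfolding power_add[symmetric] using \<open>r > 1\<close> by (intro le_imp_power_dvd) auto
    thus ?thesis using True dvdm_mono[OF dd] by (simp add: dvdm_smult)
  next
    case False
    hence odd: "odd p" using p prime_odd_nat prime_ge_2_nat[OF p] by (metis le_neq_implies_less)
    hence "p choose 2 = p * ((p - 1) div 2)"
      by (auto simp: choose_two elim!: oddE)
    hence e: "(of_nat (p choose 2) :: 'a) = of_nat p * of_nat ((p - 1) div 2)" by simp
    have "dvdm (p * (p ^ r * p ^ r)) (of_nat (p choose 2) \<cdot>\<^sub>m (D * D))"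
      unfolding e by (rule dvdm_smult3[OF dd])
    moreover have "p ^ (r + 2) dvd p * (p ^ r * p ^ r)"
      unfolding power_add[symmetric] power_Suc[symmetric] using r by (intro le_imp_power_dvd) auto
    ultimately show ?thesis by (rule dvdm_mono)
  qed
  have "mat_cong (1\<^sub>m n + of_nat p \<cdot>\<^sub>m D + of_nat (p choose 2) \<cdot>\<^sub>m (D * D)) (1\<^sub>m n + of_nat p \<cdot>\<^sub>m D) (p ^ (r + 2))"
    using mc_plus_dvdm[of "1\<^sub>m n + of_nat p \<cdot>\<^sub>m D" n] D d2 by simp
  moreover have "X ^\<^sub>m p \<in> carrier_mat n n" "1\<^sub>m n + of_nat p \<cdot>\<^sub>m D + of_nat (p choose 2) \<cdot>\<^sub>m (D * D) \<in> carrier_mat n n"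
    using X D by auto
  ultimately show ?thesis unfolding D_def[symmetric]
    using mc_trans[OF _ _ c1] by blast
qed



lemma smult_smult_mat: "a \<cdot>\<^sub>m (b \<cdot>\<^sub>m A) = (a * b :: 'a::comm_ring_1) \<cdot>\<^sub>m A"
  by (rule eq_matI) (auto simp: mult.assoc)

lemma scalar_key:
  assumes fb: "free_Z_basis (v :: 'i \<Rightarrow> 'a::comm_ring_1)" and p: "p \<noteq> 0"
    and e: "(of_nat (p ^ r) :: 'a) dvd e"
  shows "(of_nat (p ^ (r + 2)) :: 'a) dvd of_nat p * e \<longleftrightarrow> of_nat (p ^ (r + 1)) dvd e"
proof -
  from e obtain f where f: "e = of_nat (p ^ r) * f" by (auto simp: dvd_def)
  have pe: "(of_nat p :: 'a) * e = of_nat (p ^ (r + 1)) * f" unfolding f by (simp add: ac_simps)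
  have p2: "(of_nat (p ^ (r + 2)) :: 'a) = of_nat (p ^ (r + 1)) * of_nat p" by (simp add: ac_simps)
  have p1: "(of_nat (p ^ (r + 1)) :: 'a) = of_nat (p ^ r) * of_nat p" by (simp add: ac_simps)
  have "(of_nat (p ^ (r + 2)) :: 'a) dvd of_nat p * e \<longleftrightarrow> of_nat p dvd f"
  proof
    assume a: "(of_nat (p ^ (r + 2)) :: 'a) dvd of_nat p * e"
    have "(of_nat (p ^ (r + 1)) * of_nat p :: 'a) dvd of_nat (p ^ (r + 1)) * f" using a unfolding pe p2 .
    hence d: "(of_nat (p ^ (r + 1) * p) :: 'a) dvd of_nat (p ^ (r + 1)) * f" unfolding of_nat_mult .
    have "p ^ (r + 1) \<noteq> 0" using p by simp
    from free_cancel[OF fb this d] show "of_nat p dvd f" .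
  next
    assume "of_nat p dvd f"
    hence "(of_nat (p ^ (r + 1)) * of_nat p :: 'a) dvd of_nat (p ^ (r + 1)) * f"
      by (rule mult_dvd_mono[OF dvd_refl])
    thus "(of_nat (p ^ (r + 2)) :: 'a) dvd of_nat p * e" unfolding pe p2 .
  qed
  also have "\<dots> \<longleftrightarrow> (of_nat (p ^ (r + 1)) :: 'a) dvd e"
  proof
    assume "of_nat p dvd f"
    hence "(of_nat (p ^ r) * of_nat p :: 'a) dvd of_nat (p ^ r) * f"
      by (rule mult_dvd_mono[OF dvd_refl])
    thus "(of_nat (p ^ (r + 1)) :: 'a) dvd e" unfolding f p1 .
  next
    assume a: "(of_nat (p ^ (r + 1)) :: 'a) dvd e"
    have "(of_nat (p ^ r) * of_nat p :: 'a) dvd of_nat (p ^ r) * f" using a unfolding f p1 .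
    hence d: "(of_nat (p ^ r * p) :: 'a) dvd of_nat (p ^ r) * f" unfolding of_nat_mult .
    have "p ^ r \<noteq> 0" using p by simp
    from free_cancel[OF fb this d] show "of_nat p dvd f" .
  qed
  finally show ?thesis .
qed

lemma lin_cong_iff:
  fixes X :: "'a::comm_ring_1 mat"
  assumes fb: "free_Z_basis (v :: 'i \<Rightarrow> 'a)" and p: "p \<noteq> 0"
    and X: "X \<in> carrier_mat n n" and X': "X' \<in> carrier_mat n n"
    and cX: "mat_cong X (1\<^sub>m n) (p ^ r)" and cX': "mat_cong X' (1\<^sub>m n) (p ^ r)"
  shows "mat_cong (1\<^sub>m n + of_nat p \<cdot>\<^sub>m (X - 1\<^sub>m n)) (1\<^sub>m n + of_nat p \<cdot>\<^sub>m (X' - 1\<^sub>m n)) (p ^ (r + 2))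
     \<longleftrightarrow> mat_cong X X' (p ^ (r + 1))"
proof -
  have cXX': "mat_cong X X' (p ^ r)" using mc_trans[OF X _ cX] mc_sym[OF X' _ cX'] X' by auto
  { fix i j assume ij: "i < n" "j < n"
    have e: "(of_nat (p ^ r) :: 'a) dvd X $$ (i,j) - X' $$ (i,j)" using cXX' ij X X' by (auto simp: mat_cong_def)
    have "(1\<^sub>m n + of_nat p \<cdot>\<^sub>m (X - 1\<^sub>m n)) $$ (i,j) - (1\<^sub>m n + of_nat p \<cdot>\<^sub>m (X' - 1\<^sub>m n)) $$ (i,j)
       = of_nat p * (X $$ (i,j) - X' $$ (i,j))" using ij X X' by (simp add: algebra_simps)
    hence "of_nat (p ^ (r + 2)) dvd (1\<^sub>m n + of_nat p \<cdot>\<^sub>m (X - 1\<^sub>m n)) $$ (i,j) - (1\<^sub>m n + of_nat p \<cdot>\<^sub>m (X' - 1\<^sub>m n)) $$ (i,j)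
      \<longleftrightarrow> (of_nat (p ^ (r + 1)) :: 'a) dvd X $$ (i,j) - X' $$ (i,j)"
      using scalar_key[OF fb p e] by simp }
  thus ?thesis using X X' by (simp add: mat_cong_iff[of _ n])
qed

lemma pow_cong_iff:
  fixes X :: "'a::comm_ring_1 mat"
  assumes fb: "free_Z_basis (v :: 'i \<Rightarrow> 'a)"
    and X: "X \<in> carrier_mat n n" and X': "X' \<in> carrier_mat n n"
    and cX: "mat_cong X (1\<^sub>m n) (p ^ r)" and cX': "mat_cong X' (1\<^sub>m n) (p ^ r)"
    and p: "prime p" and r: "r \<ge> 1" and pr: "p \<noteq> 2 \<or> r > 1"
  shows "mat_cong (X ^\<^sub>m p) (X' ^\<^sub>m p) (p ^ (r + 2)) \<longleftrightarrow> mat_cong X X' (p ^ (r + 1))"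
proof -
  have p0: "p \<noteq> 0" using p by auto
  let ?L = "1\<^sub>m n + of_nat p \<cdot>\<^sub>m (X - 1\<^sub>m n)" and ?L' = "1\<^sub>m n + of_nat p \<cdot>\<^sub>m (X' - 1\<^sub>m n)"
  have c1: "mat_cong (X ^\<^sub>m p) ?L (p ^ (r + 2))" by (rule pow_lin[OF X cX p r pr])
  have c2: "mat_cong (X' ^\<^sub>m p) ?L' (p ^ (r + 2))" by (rule pow_lin[OF X' cX' p r pr])
  have C: "X ^\<^sub>m p \<in> carrier_mat n n" "X' ^\<^sub>m p \<in> carrier_mat n n" "?L \<in> carrier_mat n n" "?L' \<in> carrier_mat n n"
    using X X' by auto
  have "mat_cong (X ^\<^sub>m p) (X' ^\<^sub>m p) (p ^ (r + 2)) \<longleftrightarrow> mat_cong ?L ?L' (p ^ (r + 2))"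
  proof
    assume a: "mat_cong (X ^\<^sub>m p) (X' ^\<^sub>m p) (p ^ (r + 2))"
    have "mat_cong ?L (X ^\<^sub>m p) (p ^ (r + 2))" by (rule mc_sym[OF C(1) C(3) c1])
    hence "mat_cong ?L (X' ^\<^sub>m p) (p ^ (r + 2))" by (rule mc_trans[OF C(3) C(1) _ a])
    thus "mat_cong ?L ?L' (p ^ (r + 2))" by (rule mc_trans[OF C(3) C(2) _ c2])
  next
    assume a: "mat_cong ?L ?L' (p ^ (r + 2))"
    have "mat_cong (X ^\<^sub>m p) ?L' (p ^ (r + 2))" by (rule mc_trans[OF C(1) C(3) c1 a])
    moreover have "mat_cong ?L' (X' ^\<^sub>m p) (p ^ (r + 2))" by (rule mc_sym[OF C(2) C(4) c2])
    ultimately show "mat_cong (X ^\<^sub>m p) (X' ^\<^sub>m p) (p ^ (r + 2))" by (rule mc_trans[OF C(1) C(4)])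
  qed
  thus ?thesis using lin_cong_iff[OF fb p0 X X' cX cX'] by simp
qed

lemma expand11:
  fixes A :: "'a::comm_ring_1 mat"
  assumes A: "A \<in> carrier_mat n n" and B: "B \<in> carrier_mat n n"
  shows "(1\<^sub>m n + A) * (1\<^sub>m n + B) = 1\<^sub>m n + A + B + A * B"
proof -
  have "(1\<^sub>m n + A) * (1\<^sub>m n + B) = 1\<^sub>m n * (1\<^sub>m n + B) + A * (1\<^sub>m n + B)"
    using add_mult_distrib_mat[OF one_carrier_mat A, of "1\<^sub>m n + B" n] B by simp
  also have "\<dots> = 1\<^sub>m n + B + (A + A * B)"
    using mult_expand1[OF A B] B by simp
  finally show ?thesis by (intro eq_matI) (insert A B, auto simp del: index_mult_mat(1))
qed

lemma mult_pow_cong: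
  fixes X :: "'a::comm_ring_1 mat"
  assumes X: "X \<in> carrier_mat n n" and Y: "Y \<in> carrier_mat n n"
    and cX: "mat_cong X (1\<^sub>m n) (p ^ r)" and cY: "mat_cong Y (1\<^sub>m n) (p ^ r)"
    and p: "prime p" and r: "r \<ge> 1" and pr: "p \<noteq> 2 \<or> r > 1"
  shows "mat_cong ((X * Y) ^\<^sub>m p) (X ^\<^sub>m p * Y ^\<^sub>m p) (p ^ (r + 2))"
proof -
  define D where "D = X - 1\<^sub>m n"
  define E where "E = Y - 1\<^sub>m n"
  have D: "D \<in> carrier_mat n n" and E: "E \<in> carrier_mat n n" using X Y by (auto simp: D_def E_def)
  have dD: "dvdm (p ^ r) D" using cX X unfolding D_def by (simp add: mc_dvdm[of _ n])
  have dE: "dvdm (p ^ r) E" using cY Y unfolding E_def by (simp add: mc_dvdm[of _ n])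
  have XY: "X * Y \<in> carrier_mat n n" using X Y by auto
  have cXY: "mat_cong (X * Y) (1\<^sub>m n) (p ^ r)"
    using mc_mult[OF X Y one_carrier_mat one_carrier_mat cX cY] by simp
  have c1: "mat_cong ((X * Y) ^\<^sub>m p) (1\<^sub>m n + of_nat p \<cdot>\<^sub>m (X * Y - 1\<^sub>m n)) (p ^ (r + 2))"
    by (rule pow_lin[OF XY cXY p r pr])
  have c2: "mat_cong (X ^\<^sub>m p * Y ^\<^sub>m p) ((1\<^sub>m n + of_nat p \<cdot>\<^sub>m D) * (1\<^sub>m n + of_nat p \<cdot>\<^sub>m E)) (p ^ (r + 2))"
    unfolding D_def E_def using X Y
    by (intro mc_mult[of _ n] pow_lin[OF _ _ p r pr] cX cY) auto
  have eXY: "X * Y = 1\<^sub>m n + D + E + D * E"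
    using expand11[OF D E] X_as_1D[OF X] X_as_1D[OF Y] unfolding D_def E_def by metis
  have e2: "(1\<^sub>m n + of_nat p \<cdot>\<^sub>m D) * (1\<^sub>m n + of_nat p \<cdot>\<^sub>m E) =
     1\<^sub>m n + of_nat p \<cdot>\<^sub>m D + of_nat p \<cdot>\<^sub>m E + (of_nat p * of_nat p) \<cdot>\<^sub>m (D * E)"
    using expand11[of "of_nat p \<cdot>\<^sub>m D" n "of_nat p \<cdot>\<^sub>m E"] D E
    by (simp add: mult_smult_assoc_mat[of _ n n] mult_smult_distrib[of _ n n] smult_smult_mat)
  have dDE: "dvdm (p ^ r * p ^ r) (D * E)" by (rule dvdm_mult[OF D E dD dE])
  have c3: "mat_cong (1\<^sub>m n + of_nat p \<cdot>\<^sub>m (X * Y - 1\<^sub>m n))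
      ((1\<^sub>m n + of_nat p \<cdot>\<^sub>m D) * (1\<^sub>m n + of_nat p \<cdot>\<^sub>m E)) (p ^ (r + 2))"
    unfolding mat_cong_iff[OF add_carrier_mat[OF smult_carrier_mat[OF minus_carrier_mat[OF one_carrier_mat]]]
        mult_carrier_mat[OF add_carrier_mat[OF smult_carrier_mat[OF D]] add_carrier_mat[OF smult_carrier_mat[OF E]]]]
  proof (intro allI impI)
    fix i j assume ij: "i < n" "j < n"
    have "(1\<^sub>m n + of_nat p \<cdot>\<^sub>m (X * Y - 1\<^sub>m n)) $$ (i, j) -
        ((1\<^sub>m n + of_nat p \<cdot>\<^sub>m D) * (1\<^sub>m n + of_nat p \<cdot>\<^sub>m E)) $$ (i, j)
      = (of_nat p - of_nat p * of_nat p) * (D * E) $$ (i, j)"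
      unfolding e2 eXY using ij D E by (simp del: index_mult_mat(1) add: algebra_simps)
    moreover have "(of_nat (p ^ (r + 2)) :: 'a) dvd (of_nat p - of_nat p * of_nat p) * (D * E) $$ (i, j)"
    proof -
      have h0: "(of_nat (p ^ r * p ^ r) :: 'a) dvd (D * E) $$ (i, j)" using dDE ij D E by (auto simp: dvdm_def)
      have "(of_nat p * of_nat (p ^ r * p ^ r) :: 'a) dvd (of_nat p * (1 - of_nat p)) * (D * E) $$ (i, j)"
        using mult_dvd_mono[OF dvd_refl[of "of_nat p"] dvd_mult[OF h0, of "1 - of_nat p"]] by (simp add: mult.assoc)
      hence "(of_nat (p * (p ^ r * p ^ r)) :: 'a) dvd (of_nat p - of_nat p * of_nat p) * (D * E) $$ (i, j)"
        by (simp add: algebra_simps)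
      moreover have "p ^ (r + 2) dvd p * (p ^ r * p ^ r)"
        unfolding power_add[symmetric] power_Suc[symmetric] using r by (intro le_imp_power_dvd) auto
      ultimately show ?thesis using dvd_trans of_nat_dvd_mono by blast
    qed
    ultimately show "(of_nat (p ^ (r + 2)) :: 'a) dvd (1\<^sub>m n + of_nat p \<cdot>\<^sub>m (X * Y - 1\<^sub>m n)) $$ (i, j) -
        ((1\<^sub>m n + of_nat p \<cdot>\<^sub>m D) * (1\<^sub>m n + of_nat p \<cdot>\<^sub>m E)) $$ (i, j)" by simp
  qed
  have C: "(X * Y) ^\<^sub>m p \<in> carrier_mat n n" "X ^\<^sub>m p * Y ^\<^sub>m p \<in> carrier_mat n n"
    "1\<^sub>m n + of_nat p \<cdot>\<^sub>m (X * Y - 1\<^sub>m n) \<in> carrier_mat n n"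
    "(1\<^sub>m n + of_nat p \<cdot>\<^sub>m D) * (1\<^sub>m n + of_nat p \<cdot>\<^sub>m E) \<in> carrier_mat n n"
    using X Y D E by auto
  have "mat_cong ((X * Y) ^\<^sub>m p) ((1\<^sub>m n + of_nat p \<cdot>\<^sub>m D) * (1\<^sub>m n + of_nat p \<cdot>\<^sub>m E)) (p ^ (r + 2))"
    by (rule mc_trans[OF C(1) C(3) c1 c3])
  moreover have "mat_cong ((1\<^sub>m n + of_nat p \<cdot>\<^sub>m D) * (1\<^sub>m n + of_nat p \<cdot>\<^sub>m E)) (X ^\<^sub>m p * Y ^\<^sub>m p) (p ^ (r + 2))"
    by (rule mc_sym[OF C(2) C(4) c2])
  ultimately show ?thesis by (rule mc_trans[OF C(1) C(4)])
qed



definition Lset :: "nat \<Rightarrow> nat \<Rightarrow> nat \<Rightarrow> 'a::comm_ring_1 mat set" where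
  "Lset n p m = {M \<in> carrier_mat n n. \<exists>X\<in>SL n. mat_cong X (1\<^sub>m n + of_nat (p ^ m) \<cdot>\<^sub>m M) (p ^ (m + 1))}"

lemma Lset_zero: "0\<^sub>m n n \<in> Lset n p m"
proof -
  have "1\<^sub>m n + of_nat (p ^ m) \<cdot>\<^sub>m 0\<^sub>m n n = (1\<^sub>m n :: 'a mat)" by (rule eq_matI) auto
  thus ?thesis unfolding Lset_def using SL_one by (auto intro!: bexI[of _ "1\<^sub>m n"] mc_refl)
qed

lemma Lset_add:
  assumes m: "m \<ge> 1" and M1: "M1 \<in> Lset n p m" and M2: "M2 \<in> Lset n p m"
  shows "M1 + M2 \<in> (Lset n p m :: 'a::comm_ring_1 mat set)"
proof -
  obtain X1 where X1: "X1 \<in> SL n" "mat_cong X1 (1\<^sub>m n + of_nat (p ^ m) \<cdot>\<^sub>m M1) (p ^ (m + 1))"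
    and C1: "M1 \<in> carrier_mat n n" using M1 unfolding Lset_def by auto
  obtain X2 where X2: "X2 \<in> SL n" "mat_cong X2 (1\<^sub>m n + of_nat (p ^ m) \<cdot>\<^sub>m M2) (p ^ (m + 1))"
    and C2: "M2 \<in> carrier_mat n n" using M2 unfolding Lset_def by auto
  let ?q = "of_nat (p ^ m) :: 'a"
  have c1: "mat_cong (X1 * X2) ((1\<^sub>m n + ?q \<cdot>\<^sub>m M1) * (1\<^sub>m n + ?q \<cdot>\<^sub>m M2)) (p ^ (m + 1))"
    using X1 X2 C1 C2 by (intro mc_mult[of _ n]) (auto simp: SL_carrier)
  have e: "(1\<^sub>m n + ?q \<cdot>\<^sub>m M1) * (1\<^sub>m n + ?q \<cdot>\<^sub>m M2) = 1\<^sub>m n + ?q \<cdot>\<^sub>m M1 + ?q \<cdot>\<^sub>m M2 + (?q * ?q) \<cdot>\<^sub>m (M1 * M2)"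
    using expand11[of "?q \<cdot>\<^sub>m M1" n "?q \<cdot>\<^sub>m M2"] C1 C2
    by (simp add: mult_smult_assoc_mat[of _ n n] mult_smult_distrib[of _ n n] smult_smult_mat)
  have dq: "p ^ (m + 1) dvd p ^ m * p ^ m"
    unfolding power_add[symmetric] using m by (intro le_imp_power_dvd) auto
  have c2: "mat_cong ((1\<^sub>m n + ?q \<cdot>\<^sub>m M1) * (1\<^sub>m n + ?q \<cdot>\<^sub>m M2)) (1\<^sub>m n + ?q \<cdot>\<^sub>m (M1 + M2)) (p ^ (m + 1))"
    unfolding e mat_cong_def
  proof (intro allI impI)
    fix i j assume ij: "i < dim_row (1\<^sub>m n + ?q \<cdot>\<^sub>m M1 + ?q \<cdot>\<^sub>m M2 + (?q * ?q) \<cdot>\<^sub>m (M1 * M2))"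
      "j < dim_col (1\<^sub>m n + ?q \<cdot>\<^sub>m M1 + ?q \<cdot>\<^sub>m M2 + (?q * ?q) \<cdot>\<^sub>m (M1 * M2))"
    hence ij': "i < n" "j < n" using C1 C2 by auto
    have "(1\<^sub>m n + ?q \<cdot>\<^sub>m M1 + ?q \<cdot>\<^sub>m M2 + (?q * ?q) \<cdot>\<^sub>m (M1 * M2)) $$ (i, j) - (1\<^sub>m n + ?q \<cdot>\<^sub>m (M1 + M2)) $$ (i, j)
       = of_nat (p ^ m * p ^ m) * (M1 * M2) $$ (i, j)"
      using ij' C1 C2 by (simp del: index_mult_mat(1) add: algebra_simps)
    also have "of_nat (p ^ (m + 1)) dvd \<dots>" by (rule dvd_mult2[OF of_nat_dvd_mono[OF dq]])
    finally show "of_nat (p ^ (m + 1)) dvd (1\<^sub>m n + ?q \<cdot>\<^sub>m M1 + ?q \<cdot>\<^sub>m M2 + (?q * ?q) \<cdot>\<^sub>m (M1 * M2)) $$ (i, j) - (1\<^sub>m n + ?q \<cdot>\<^sub>m (M1 + M2)) $$ (i, j)" .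
  qed
  have "mat_cong (X1 * X2) (1\<^sub>m n + ?q \<cdot>\<^sub>m (M1 + M2)) (p ^ (m + 1))"
    by (rule mc_trans[OF _ _ c1 c2]) (use SL_carrier[OF X1(1)] SL_carrier[OF X2(1)] C1 C2 in auto)
  moreover have "X1 * X2 \<in> SL n" using X1 X2 SL_mult by auto
  ultimately show ?thesis unfolding Lset_def using C1 C2 by auto
qed

lemma Lset_cong:
  assumes M: "M \<in> Lset n p m" and M': "M' \<in> carrier_mat n n" and c: "mat_cong M' M p"
  shows "M' \<in> (Lset n p m :: 'a::comm_ring_1 mat set)"
proof -
  obtain X where X: "X \<in> SL n" "mat_cong X (1\<^sub>m n + of_nat (p ^ m) \<cdot>\<^sub>m M) (p ^ (m + 1))"
    and C: "M \<in> carrier_mat n n" using M unfolding Lset_def by auto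
  have "mat_cong (1\<^sub>m n + of_nat (p ^ m) \<cdot>\<^sub>m M) (1\<^sub>m n + of_nat (p ^ m) \<cdot>\<^sub>m M') (p ^ (m + 1))"
    unfolding mat_cong_def
  proof (intro allI impI)
    fix i j assume "i < dim_row (1\<^sub>m n + of_nat (p ^ m) \<cdot>\<^sub>m M)" "j < dim_col (1\<^sub>m n + of_nat (p ^ m) \<cdot>\<^sub>m M)"
    hence ij: "i < n" "j < n" using C by auto
    have "(of_nat p :: 'a) dvd M $$ (i,j) - M' $$ (i,j)"
      using c ij M' C unfolding mat_cong_def by (metis carrier_matD dvd_minus_iff minus_diff_eq)
    hence "(of_nat (p ^ m) * of_nat p :: 'a) dvd of_nat (p ^ m) * (M $$ (i,j) - M' $$ (i,j))"
      by (rule mult_dvd_mono[OF dvd_refl])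
    thus "(of_nat (p ^ (m + 1)) :: 'a) dvd (1\<^sub>m n + of_nat (p ^ m) \<cdot>\<^sub>m M) $$ (i, j) - (1\<^sub>m n + of_nat (p ^ m) \<cdot>\<^sub>m M') $$ (i, j)"
      using ij C M' by (simp add: algebra_simps)
  qed
  hence "mat_cong X (1\<^sub>m n + of_nat (p ^ m) \<cdot>\<^sub>m M') (p ^ (m + 1))"
    using mc_trans[OF _ _ X(2)] SL_carrier[OF X(1)] C by auto
  thus ?thesis unfolding Lset_def using X M' by auto
qed

lemma Lset_elem:
  assumes ij: "i < n" "j < n" "i \<noteq> j"
  shows "b \<cdot>\<^sub>m unit_mat n i j \<in> (Lset n p m :: 'a::comm_ring_1 mat set)"
proof -
  define X where "X = addrow_mat n (of_nat (p ^ m) * b) i j"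
  have "X \<in> SL n" unfolding X_def SL_def using det_addrow_mat[OF ij(3)] by auto
  moreover have "X = 1\<^sub>m n + of_nat (p ^ m) \<cdot>\<^sub>m (b \<cdot>\<^sub>m unit_mat n i j)"
    unfolding X_def by (rule eq_matI) (auto simp: unit_mat_def)
  ultimately show ?thesis unfolding Lset_def by (auto simp: unit_mat_def intro: mc_refl)
qed



lemma unit_mat_carrier[simp]: "unit_mat n i j \<in> carrier_mat n n"
  by (simp add: unit_mat_def)

lemma Lset_diag:
  assumes il: "i < n" "l < n" "i \<noteq> l" and m: "m \<ge> 1"
  shows "b \<cdot>\<^sub>m (unit_mat n i i - unit_mat n l l) \<in> (Lset n p m :: 'a::comm_ring_1 mat set)"
proof -
  define u where "u = (of_nat (p ^ m) :: 'a) * b"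
  define W where "W = addrow (- u) l i (addrow 1 i l (addrow u l i (addrow_mat n (u - 1) i l)))"
  have Wp: "W = addrow_mat n (- u) l i * (addrow_mat n 1 i l * (addrow_mat n u l i * addrow_mat n (u - 1) i l))"
  proof -
    define A0 where "A0 = addrow_mat n (u - 1) i l"
    have A0: "A0 \<in> carrier_mat n n" unfolding A0_def by simp
    have 1: "addrow u l i A0 = addrow_mat n u l i * A0" using addrow_mat[OF A0 il(1)] .
    have A1: "addrow_mat n u l i * A0 \<in> carrier_mat n n" using A0 by (intro mult_carrier_mat) auto
    have 2: "addrow 1 i l (addrow_mat n u l i * A0) = addrow_mat n 1 i l * (addrow_mat n u l i * A0)"
      using addrow_mat[OF A1 il(2)] .
    have A2: "addrow_mat n 1 i l * (addrow_mat n u l i * A0) \<in> carrier_mat n n" by (rule mult_carrier_mat[OF _ A1]) simp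
    have 3: "addrow (- u) l i (addrow_mat n 1 i l * (addrow_mat n u l i * A0)) = addrow_mat n (- u) l i * (addrow_mat n 1 i l * (addrow_mat n u l i * A0))"
      using addrow_mat[OF A2 il(1)] .
    show ?thesis unfolding W_def A0_def[symmetric] 1 2 3 ..
  qed
  have cP: "addrow_mat n u l i * addrow_mat n (u - 1) i l \<in> carrier_mat n n"
    by (rule mult_carrier_mat) auto
  have cP2: "addrow_mat n 1 i l * (addrow_mat n u l i * addrow_mat n (u - 1) i l) \<in> carrier_mat n n"
    by (rule mult_carrier_mat[OF _ cP]) simp
  have "det W = det (addrow_mat n (- u) l i) * (det (addrow_mat n 1 i l) * (det (addrow_mat n u l i) * det (addrow_mat n (u - 1) i l)))"
    unfolding Wp det_mult[OF addrow_mat_carrier cP2] det_mult[OF addrow_mat_carrier cP] det_mult[OF addrow_mat_carrier addrow_mat_carrier] ..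
  hence "det W = 1" using il by (simp add: det_addrow_mat)
  hence WS: "W \<in> SL n" unfolding SL_def W_def by auto
  define T where "T = 1\<^sub>m n + of_nat (p ^ m) \<cdot>\<^sub>m (b \<cdot>\<^sub>m (unit_mat n i i - unit_mat n l l))"
  have dq: "(of_nat (p ^ (m + 1)) :: 'a) dvd u * u"
  proof -
    have "p ^ (m + 1) dvd p ^ m * p ^ m"
      unfolding power_add[symmetric] using m by (intro le_imp_power_dvd) auto
    hence "(of_nat (p ^ (m + 1)) :: 'a) dvd of_nat (p ^ m) * of_nat (p ^ m)"
      using of_nat_dvd_mono by fastforce
    thus ?thesis unfolding u_def by (simp add: mult_dvd_mono ac_simps dvd_mult2)
  qed
  have "mat_cong W T (p ^ (m + 1))"
    unfolding mat_cong_def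
  proof (intro allI impI)
    fix a c assume "a < dim_row W" "c < dim_col W"
    hence ac: "a < n" "c < n" unfolding W_def by auto
    have "W $$ (a, c) - T $$ (a, c) = u * u *
      (if a = i \<and> c = l then 1 else if a = l \<and> c = i then -1 else if a = l \<and> c = l then 1 - u else 0)"
      unfolding W_def T_def using ac il
      by (auto simp: unit_mat_def u_def algebra_simps)
    thus "(of_nat (p ^ (m + 1)) :: 'a) dvd W $$ (a, c) - T $$ (a, c)"
      using dq by simp
  qed
  thus ?thesis unfolding Lset_def T_def using WS by (auto intro: minus_carrier_mat)
qed



definition gen :: "nat \<Rightarrow> nat \<Rightarrow> 'a::comm_ring_1 mat \<Rightarrow> nat \<times> nat \<Rightarrow> 'a mat" where
  "gen n l B s = (if fst s \<noteq> snd s then B $$ s \<cdot>\<^sub>m unit_mat n (fst s) (snd s)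
      else B $$ s \<cdot>\<^sub>m (unit_mat n (fst s) (fst s) - unit_mat n l l))"

lemma gen_carrier[simp]: "gen n l B s \<in> carrier_mat n n"
  unfolding gen_def by (auto intro: minus_carrier_mat)

lemma gen_dims[simp]: "dim_row (gen n l B s) = n" "dim_col (gen n l B s) = n"
  using gen_carrier[of n l B s] unfolding carrier_mat_def by auto

lemma gen_index: "x < n \<Longrightarrow> y < n \<Longrightarrow> gen n l B (a, c) $$ (x, y) =
   (if a \<noteq> c then (if x = a \<and> y = c then B $$ (a, c) else 0)
    else B $$ (a, a) * ((if x = a \<and> y = a then 1 else 0) - (if x = l \<and> y = l then 1 else 0)))"
  unfolding gen_def by (auto simp: unit_mat_def)

lemma gen_Lset:
  assumes "a < n" "c < n" "l < n" "m \<ge> 1"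
  shows "gen n l B (a, c) \<in> (Lset n p m :: 'a::comm_ring_1 mat set)"
proof (cases "a = c")
  case False thus ?thesis using Lset_elem assms by (simp add: gen_def)
next
  case True
  show ?thesis
  proof (cases "a = l")
    case False thus ?thesis using Lset_diag assms True by (simp add: gen_def)
  next
    case True2: True
    have "gen n l B (a, c) = 0\<^sub>m n n" using True True2
      by (intro eq_matI) (auto simp: gen_index)
    thus ?thesis using Lset_zero by simp
  qed
qed

definition Gs :: "nat \<Rightarrow> nat \<Rightarrow> 'a::comm_ring_1 mat \<Rightarrow> (nat \<times> nat) set \<Rightarrow> 'a mat" where
  "Gs n l B S = mat n n (\<lambda>(x, y). \<Sum>s\<in>S. gen n l B s $$ (x, y))"

lemma Gs_Lset:
  assumes "finite S" "S \<subseteq> {0..<n} \<times> {0..<n}" "l < n" "m \<ge> 1"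
  shows "Gs n l B S \<in> (Lset n p m :: 'a::comm_ring_1 mat set)"
  using assms
proof (induction S rule: finite_induct)
  case empty
  have "Gs n l B {} = (0\<^sub>m n n :: 'a mat)" unfolding Gs_def by (rule eq_matI) auto
  thus ?case using Lset_zero by simp
next
  case (insert s S)
  obtain a c where s: "s = (a, c)" by force
  have "Gs n l B (insert s S) = Gs n l B S + gen n l B s"
    unfolding Gs_def by (rule eq_matI) (use insert in \<open>auto simp: add.commute\<close>)
  moreover have "Gs n l B S \<in> Lset n p m" using insert by auto
  moreover have "gen n l B s \<in> Lset n p m" unfolding s
    using insert(4,5,6) s by (intro gen_Lset) auto
  ultimately show ?case using Lset_add[OF insert(6)] by simp
qed

lemma row_sum:
  assumes "a < n" "x < n" "y < n"
  shows "(\<Sum>c\<in>{0..<n}. gen n l B (a, c) $$ (x, y)) =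
    (if a = x \<and> x \<noteq> y then B $$ (x, y) else 0) +
    B $$ (a, a) * ((if x = a \<and> y = a then 1 else 0) - (if x = l \<and> y = l then 1 else 0))"
proof -
  have "(\<Sum>c\<in>{0..<n}. gen n l B (a, c) $$ (x, y)) =
     (\<Sum>c\<in>{0..<n}. (if c = y then (if a = x \<and> x \<noteq> y then B $$ (x, y) else 0) else 0) +
       (if c = a then B $$ (a, a) * ((if x = a \<and> y = a then 1 else 0) - (if x = l \<and> y = l then 1 else 0)) else 0))"
    using assms by (intro sum.cong) (auto simp: gen_index)
  also have "\<dots> = (if a = x \<and> x \<noteq> y then B $$ (x, y) else 0) +
    B $$ (a, a) * ((if x = a \<and> y = a then 1 else 0) - (if x = l \<and> y = l then 1 else 0))"
    using assms by (simp add: sum.distrib)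
  finally show ?thesis .
qed

lemma Gs_full:
  assumes "x < n" "y < n"
  shows "Gs n l B ({0..<n} \<times> {0..<n}) $$ (x, y) =
    B $$ (x, y) - (if x = l \<and> y = l then (\<Sum>a\<in>{0..<n}. B $$ (a, a)) else 0)"
proof -
  have "Gs n l B ({0..<n} \<times> {0..<n}) $$ (x, y) = (\<Sum>a\<in>{0..<n}. \<Sum>c\<in>{0..<n}. gen n l B (a, c) $$ (x, y))"
    unfolding Gs_def using assms by (simp add: sum.cartesian_product)
  also have "\<dots> = (\<Sum>a\<in>{0..<n}. (if a = x then (if x \<noteq> y then B $$ (x, y) else 0) else 0) +
    ((if a = x then (if x = y then B $$ (x, x) else 0) else 0) -
       (if x = l \<and> y = l then B $$ (a, a) else 0)))"
    using assms by (intro sum.cong) (auto simp: row_sum algebra_simps)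
  also have "\<dots> = B $$ (x, y) - (if x = l \<and> y = l then (\<Sum>a\<in>{0..<n}. B $$ (a, a)) else 0)"
    using assms by (cases "x = l \<and> y = l") (auto simp: sum.distrib sum_subtractf)
  finally show ?thesis .
qed

lemma Lset_trace:
  assumes B: "B \<in> carrier_mat n n" and n: "n \<ge> 1" and m: "m \<ge> 1"
    and tr: "of_nat p dvd (\<Sum>a\<in>{0..<n}. B $$ (a, a))"
  shows "B \<in> (Lset n p m :: 'a::comm_ring_1 mat set)"
proof -
  have l: "n - 1 < n" using n by auto
  have G: "Gs n (n - 1) B ({0..<n} \<times> {0..<n}) \<in> Lset n p m"
    by (rule Gs_Lset[OF _ _ l m]) auto
  have "mat_cong B (Gs n (n - 1) B ({0..<n} \<times> {0..<n})) p"
    unfolding mat_cong_def using B tr by (auto simp: Gs_full)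
  thus ?thesis using Lset_cong[OF G B] by simp
qed



lemma cls_eq:
  assumes "A \<in> carrier_mat n n" "B \<in> carrier_mat n n" "mat_cong A B N"
  shows "{Y \<in> SL n. mat_cong Y A N} = {Y \<in> SL n. mat_cong Y B N}"
proof -
  have BA: "mat_cong B A N" by (rule mc_sym[OF assms])
  show ?thesis
    using mc_trans[OF _ assms(1) _ assms(3)] mc_trans[OF _ assms(2) _ BA] SL_carrier by blast
qed

lemma Gamma_from_cong:
  assumes Y: "Y \<in> SL n" and A: "A \<in> carrier_mat n n" and c: "mat_cong Y A N"
    and d: "N' dvd N" and cA: "mat_cong A (1\<^sub>m n) N'"
  shows "Y \<in> Gamma n N'"
proof -
  have "mat_cong Y A N'" by (rule mc_mono[OF c d])
  hence "mat_cong Y (1\<^sub>m n) N'" by (rule mc_trans[OF SL_carrier[OF Y] A _ cA])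
  thus ?thesis using Y by (simp add: Gamma_def)
qed

lemma one_plus_cong:
  assumes M: "M \<in> carrier_mat n n"
  shows "mat_cong (1\<^sub>m n + of_nat (p ^ m) \<cdot>\<^sub>m M) (1\<^sub>m n) (p ^ m)"
  unfolding mat_cong_def using M by auto

lemma lin_lift:
  assumes X: "X \<in> carrier_mat n n" and M: "M \<in> carrier_mat n n"
    and c: "mat_cong X (1\<^sub>m n + of_nat (p ^ m) \<cdot>\<^sub>m M) (p ^ (m + 1))"
  shows "mat_cong (1\<^sub>m n + of_nat p \<cdot>\<^sub>m (X - 1\<^sub>m n)) (1\<^sub>m n + of_nat (p ^ (m + 1)) \<cdot>\<^sub>m M) (p ^ (m + 2))"
  unfolding mat_cong_def
proof (intro allI impI)
  fix i j assume "i < dim_row (1\<^sub>m n + of_nat p \<cdot>\<^sub>m (X - 1\<^sub>m n))" "j < dim_col (1\<^sub>m n + of_nat p \<cdot>\<^sub>m (X - 1\<^sub>m n))"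
  hence ij: "i < n" "j < n" using X by auto
  have "(of_nat (p ^ (m + 1)) :: 'a) dvd X $$ (i,j) - (1\<^sub>m n + of_nat (p ^ m) \<cdot>\<^sub>m M) $$ (i,j)"
    using c ij X M unfolding mat_cong_def by auto
  hence "(of_nat p * of_nat (p ^ (m + 1)) :: 'a) dvd of_nat p * (X $$ (i,j) - (1\<^sub>m n + of_nat (p ^ m) \<cdot>\<^sub>m M) $$ (i,j))"
    by (rule mult_dvd_mono[OF dvd_refl])
  thus "(of_nat (p ^ (m + 2)) :: 'a) dvd (1\<^sub>m n + of_nat p \<cdot>\<^sub>m (X - 1\<^sub>m n)) $$ (i, j) - (1\<^sub>m n + of_nat (p ^ (m + 1)) \<cdot>\<^sub>m M) $$ (i, j)"
    using ij X M by (simp add: algebra_simps)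
qed

lemma PL:
  fixes X :: "'a::comm_ring_1 mat"
  assumes X: "X \<in> SL n" and M: "M \<in> carrier_mat n n"
    and c: "mat_cong X (1\<^sub>m n + of_nat (p ^ r) \<cdot>\<^sub>m M) (p ^ (r + 1))"
    and p: "prime p" and r: "r \<ge> 1" and pr: "p \<noteq> 2 \<or> r > 1"
  shows "X \<in> Gamma n (p ^ r)" "mat_cong (X ^\<^sub>m p) (1\<^sub>m n + of_nat (p ^ (r + 1)) \<cdot>\<^sub>m M) (p ^ (r + 2))"
proof -
  show G: "X \<in> Gamma n (p ^ r)"
    by (rule Gamma_from_cong[OF X _ c _ one_plus_cong[OF M]]) (use M in auto)
  have Xc: "X \<in> carrier_mat n n" using SL_carrier[OF X] .
  have c1: "mat_cong (X ^\<^sub>m p) (1\<^sub>m n + of_nat p \<cdot>\<^sub>m (X - 1\<^sub>m n)) (p ^ (r + 2))"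
    using pow_lin[OF Xc _ p r pr] G by (simp add: Gamma_def)
  show "mat_cong (X ^\<^sub>m p) (1\<^sub>m n + of_nat (p ^ (r + 1)) \<cdot>\<^sub>m M) (p ^ (r + 2))"
    by (rule mc_trans[OF _ _ c1 lin_lift[OF Xc M c]]) (use Xc in auto)
qed

lemma pow_Gamma:
  fixes X :: "'a::comm_ring_1 mat"
  assumes X: "X \<in> Gamma n (p ^ r)" and p: "prime p" and r: "r \<ge> 1" and pr: "p \<noteq> 2 \<or> r > 1"
  shows "X ^\<^sub>m p \<in> Gamma n (p ^ (r + 1))"
proof -
  have Xc: "X \<in> carrier_mat n n" by (rule Gamma_carrier[OF X])
  have cX: "mat_cong X (1\<^sub>m n) (p ^ r)" using X by (simp add: Gamma_def)
  have c1: "mat_cong (X ^\<^sub>m p) (1\<^sub>m n + of_nat p \<cdot>\<^sub>m (X - 1\<^sub>m n)) (p ^ (r + 2))"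
    by (rule pow_lin[OF Xc cX p r pr])
  have c2: "mat_cong (1\<^sub>m n + of_nat p \<cdot>\<^sub>m (X - 1\<^sub>m n)) (1\<^sub>m n) (p ^ (r + 1))"
    unfolding mat_cong_def
  proof (intro allI impI)
    fix i j assume "i < dim_row (1\<^sub>m n + of_nat p \<cdot>\<^sub>m (X - 1\<^sub>m n))" "j < dim_col (1\<^sub>m n + of_nat p \<cdot>\<^sub>m (X - 1\<^sub>m n))"
    hence ij: "i < n" "j < n" using Xc by auto
    have "(of_nat (p ^ r) :: 'a) dvd X $$ (i,j) - 1\<^sub>m n $$ (i,j)" using cX ij Xc unfolding mat_cong_def by auto
    hence "(of_nat p * of_nat (p ^ r) :: 'a) dvd of_nat p * (X $$ (i,j) - 1\<^sub>m n $$ (i,j))"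
      by (rule mult_dvd_mono[OF dvd_refl])
    thus "(of_nat (p ^ (r + 1)) :: 'a) dvd (1\<^sub>m n + of_nat p \<cdot>\<^sub>m (X - 1\<^sub>m n)) $$ (i, j) - 1\<^sub>m n $$ (i, j)"
      using ij Xc by (simp add: algebra_simps)
  qed
  show ?thesis
    by (rule Gamma_from_cong[OF SL_pow[OF Gamma_SL[OF X]] _ c1 _ c2]) (use Xc in auto)
qed

lemma multrow_eq: "l < n \<Longrightarrow> multrow_mat n l (1 + x) = 1\<^sub>m n + x \<cdot>\<^sub>m unit_mat n l l"
  by (rule eq_matI) (auto simp: unit_mat_def)

lemma Zlem:
  fixes V :: "'a::comm_ring_1 mat"
  assumes V: "V \<in> Gamma n N1" and Y: "Y \<in> carrier_mat n n" and F: "F \<in> carrier_mat n n"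
    and c: "mat_cong Y (V + F) N2" and dF: "dvdm N1 F" and d: "N2 dvd N1 * N1"
  shows "mat_cong (Y * adj_mat V) (1\<^sub>m n + F) N2"
proof -
  have Vc: "V \<in> carrier_mat n n" by (rule Gamma_carrier[OF V])
  have aV: "adj_mat V \<in> Gamma n N1" by (rule Gamma_adj[OF V])
  have aVc: "adj_mat V \<in> carrier_mat n n" by (rule Gamma_carrier[OF aV])
  have c1: "mat_cong (Y * adj_mat V) ((V + F) * adj_mat V) N2"
    using Y Vc F aVc c by (intro mc_mult[of _ n] mc_refl) auto
  define G where "G = adj_mat V - 1\<^sub>m n"
  have Gc: "G \<in> carrier_mat n n" unfolding G_def using aVc by auto
  have dG: "dvdm N1 G" using aV aVc unfolding G_def Gamma_def by (simp add: mc_dvdm[of _ n])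
  have aVG: "adj_mat V = 1\<^sub>m n + G" unfolding G_def by (rule X_as_1D[OF aVc])
  have e: "(V + F) * adj_mat V = 1\<^sub>m n + F + F * G"
  proof -
    have "(V + F) * adj_mat V = V * adj_mat V + F * adj_mat V"
      by (rule add_mult_distrib_mat[OF Vc F aVc])
    also have "V * adj_mat V = 1\<^sub>m n" using SL_adj[OF Gamma_SL[OF V]] by simp
    also have "F * adj_mat V = F + F * G" unfolding aVG by (rule mult_expand1[OF F Gc])
    finally show ?thesis by (intro eq_matI) (insert F Gc, auto simp del: index_mult_mat(1))
  qed
  have dFG: "dvdm N2 (F * G)" using dvdm_mono[OF dvdm_mult[OF F Gc dF dG] d] .
  have c2: "mat_cong (1\<^sub>m n + F + F * G) (1\<^sub>m n + F) N2"
    using mc_plus_dvdm[of "1\<^sub>m n + F" n "F * G"] F Gc dFG by simp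
  have C: "Y * adj_mat V \<in> carrier_mat n n" "1\<^sub>m n + F + F * G \<in> carrier_mat n n"
    using Y aVc F Gc by auto
  show ?thesis using mc_trans[OF C c1[unfolded e] c2] .
qed



lemma surj_lemma:
  fixes Y :: "'a::comm_ring_1 mat"
  assumes fb: "free_Z_basis (v :: 'i \<Rightarrow> 'a)" and n: "n \<ge> 1" and p: "prime p" and r: "r \<ge> 1"
    and pr: "p \<noteq> 2 \<or> r > 1" and Y: "Y \<in> Gamma n (p ^ (r + 1))"
  shows "\<exists>X \<in> Gamma n (p ^ r). mat_cong (X ^\<^sub>m p) Y (p ^ (r + 2))"
proof -
  define q1 where "q1 = p ^ (r + 1)"
  have Yc: "Y \<in> carrier_mat n n" by (rule Gamma_carrier[OF Y])
  have cY: "mat_cong Y (1\<^sub>m n) q1" using Y by (simp add: Gamma_def q1_def)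
  define B where "B = mat n n (\<lambda>(i, j). SOME b. Y $$ (i, j) - 1\<^sub>m n $$ (i, j) = (of_nat q1 :: 'a) * b)"
  have Bc: "B \<in> carrier_mat n n" unfolding B_def by simp
  have hB: "Y $$ (i, j) - 1\<^sub>m n $$ (i, j) = of_nat q1 * B $$ (i, j)" if ij: "i < n" "j < n" for i j
  proof -
    have "(of_nat q1 :: 'a) dvd Y $$ (i, j) - 1\<^sub>m n $$ (i, j)" using cY ij Yc unfolding mat_cong_def by auto
    hence ex: "\<exists>b. Y $$ (i, j) - 1\<^sub>m n $$ (i, j) = (of_nat q1 :: 'a) * b" by (auto simp: dvd_def)
    show ?thesis unfolding B_def using ij someI_ex[OF ex] by simp
  qed
  define l where "l = n - 1"
  have l: "l < n" using n by (simp add: l_def)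
  define c where "c = (\<Sum>a\<in>{0..<n}. B $$ (a, a))"
  define B' where "B' = B - c \<cdot>\<^sub>m unit_mat n l l"
  have B'c: "B' \<in> carrier_mat n n" unfolding B'_def using Bc by simp
  have "(\<Sum>a\<in>{0..<n}. B' $$ (a, a)) = (\<Sum>a\<in>{0..<n}. B $$ (a, a) - (if a = l then c else 0))"
    unfolding B'_def using Bc by (intro sum.cong) (auto simp: unit_mat_def)
  also have "\<dots> = 0" using l by (simp add: sum_subtractf c_def)
  finally have tr: "of_nat p dvd (\<Sum>a\<in>{0..<n}. B' $$ (a, a))" by simp
  have "B' \<in> Lset n p r" by (rule Lset_trace[OF B'c n r tr])
  then obtain X0 where X0: "X0 \<in> SL n" and cX0: "mat_cong X0 (1\<^sub>m n + of_nat (p ^ r) \<cdot>\<^sub>m B') (p ^ (r + 1))"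
    unfolding Lset_def by auto
  have X0G: "X0 \<in> Gamma n (p ^ r)" by (rule PL(1)[OF X0 B'c cX0 p r pr])
  define W where "W = 1\<^sub>m n + of_nat q1 \<cdot>\<^sub>m B'"
  have Wc: "W \<in> carrier_mat n n" unfolding W_def using B'c by simp
  have cV: "mat_cong (X0 ^\<^sub>m p) W (p ^ (r + 2))" unfolding W_def q1_def by (rule PL(2)[OF X0 B'c cX0 p r pr])
  define V where "V = X0 ^\<^sub>m p"
  have VG: "V \<in> Gamma n q1" unfolding V_def q1_def by (rule pow_Gamma[OF X0G p r pr])
  have Vc: "V \<in> carrier_mat n n" by (rule Gamma_carrier[OF VG])
  define F where "F = (of_nat q1 * c) \<cdot>\<^sub>m unit_mat n l l"
  have Fc: "F \<in> carrier_mat n n" unfolding F_def by simp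
  have YWF: "Y = W + F"
  proof (rule eq_matI)
    fix i j assume ij: "i < dim_row (W + F)" "j < dim_col (W + F)"
    hence ij': "i < n" "j < n" using Fc by auto
    have "Y $$ (i, j) = 1\<^sub>m n $$ (i, j) + of_nat q1 * B $$ (i, j)" using hB[OF ij'] by (simp add: algebra_simps)
    thus "Y $$ (i, j) = (W + F) $$ (i, j)"
      unfolding W_def F_def B'_def using ij' Bc by (auto simp: unit_mat_def algebra_simps)
  qed (use Yc Fc in auto)
  have cVW: "mat_cong W V (p ^ (r + 2))" using mc_sym[OF _ Wc cV] Vc unfolding V_def by auto
  have cYVF: "mat_cong Y (V + F) (p ^ (r + 2))"
    unfolding YWF by (rule mc_add[OF Wc Fc Vc Fc cVW mc_refl])
  have dF: "dvdm q1 F" unfolding F_def dvdm_def by (auto simp: unit_mat_def)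
  have d: "p ^ (r + 2) dvd q1 * q1" unfolding q1_def power_add[symmetric]
    using r by (intro le_imp_power_dvd) auto
  have Z: "mat_cong (Y * adj_mat V) (1\<^sub>m n + F) (p ^ (r + 2))"
    by (rule Zlem[OF VG Yc Fc cYVF dF d])
  have "det (Y * adj_mat V) = 1"
    using SL_mult[OF Gamma_SL[OF Y] SL_adj(1)[OF Gamma_SL[OF VG]]] by (simp add: SL_def)
  moreover have "det (1\<^sub>m n + F) = 1 + of_nat q1 * c"
    unfolding F_def multrow_eq[OF l, symmetric] using det_multrow_mat[OF l] .
  moreover have "of_nat (p ^ (r + 2)) dvd det (Y * adj_mat V) - det (1\<^sub>m n + F)"
    by (rule det_cong[OF _ _ Z]) (use Yc Vc Fc adj_mat(1)[OF Vc] in auto)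
  ultimately have "(of_nat (p ^ (r + 2)) :: 'a) dvd - (of_nat q1 * c)" by simp
  hence "(of_nat (q1 * p) :: 'a) dvd of_nat q1 * c" unfolding q1_def by (simp add: ac_simps)
  hence pc: "(of_nat p :: 'a) dvd c" using free_cancel[OF fb, of q1 p c] p by (simp add: q1_def)
  have dF2: "dvdm (p ^ (r + 2)) F" unfolding F_def dvdm_def
  proof (intro allI impI)
    fix i j assume "i < dim_row ((of_nat q1 * c) \<cdot>\<^sub>m unit_mat n l l)" "j < dim_col ((of_nat q1 * c) \<cdot>\<^sub>m unit_mat n l l)"
    have "(of_nat q1 * of_nat p :: 'a) dvd of_nat q1 * c" using pc by (rule mult_dvd_mono[OF dvd_refl])
    hence "(of_nat (p ^ (r + 2)) :: 'a) dvd of_nat q1 * c" unfolding q1_def by (simp add: ac_simps)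
    thus "(of_nat (p ^ (r + 2)) :: 'a) dvd ((of_nat q1 * c) \<cdot>\<^sub>m unit_mat n l l) $$ (i, j)"
      using \<open>i < _\<close> \<open>j < _\<close> by (auto simp: unit_mat_def)
  qed
  have "mat_cong Y W (p ^ (r + 2))" unfolding YWF using mc_plus_dvdm[OF Wc Fc] dF2 by simp
  hence "mat_cong W Y (p ^ (r + 2))" by (rule mc_sym[OF Yc Wc])
  hence "mat_cong (X0 ^\<^sub>m p) Y (p ^ (r + 2))" using mc_trans[OF _ Wc cV] Vc unfolding V_def by blast
  thus ?thesis using X0G by auto
qed



definition Emat :: "nat \<Rightarrow> nat \<Rightarrow> nat \<Rightarrow> 'a::comm_ring_1 mat" where
  "Emat n i j = (if i \<noteq> j then unit_mat n i j else unit_mat n i i - unit_mat n (n - 1) (n - 1))"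

lemma Emat_carrier[simp]: "Emat n i j \<in> carrier_mat n n"
  unfolding Emat_def by (auto intro: minus_carrier_mat)

lemma A_mat_eq: "A_mat n p v i j k m = 1\<^sub>m n + of_nat (p ^ m) \<cdot>\<^sub>m (v k \<cdot>\<^sub>m Emat n i j)"
  unfolding A_mat_def Emat_def by (simp add: smult_smult_mat)

lemma Emat_Lset:
  assumes "i < n" "j < n" "m \<ge> 1"
  shows "b \<cdot>\<^sub>m Emat n i j \<in> (Lset n p m :: 'a::comm_ring_1 mat set)"
proof (cases "i = j")
  case False thus ?thesis using Lset_elem assms by (simp add: Emat_def)
next
  case True
  show ?thesis
  proof (cases "i = n - 1")
    case False thus ?thesis using Lset_diag[of i n "n - 1" m b p] assms True by (simp add: Emat_def)
  next
    case True2: True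
    have "b \<cdot>\<^sub>m Emat n i j = (0\<^sub>m n n :: 'a mat)" using True True2
      by (intro eq_matI) (auto simp: Emat_def unit_mat_def)
    thus ?thesis using Lset_zero by simp
  qed
qed

lemma AE_set:
  assumes M: "M \<in> carrier_mat n n"
  shows "{X \<in> Gamma n (p ^ m). mat_cong X (1\<^sub>m n + of_nat (p ^ m) \<cdot>\<^sub>m M) (p ^ (m + 1))}
     = {Y \<in> SL n. mat_cong Y (1\<^sub>m n + of_nat (p ^ m) \<cdot>\<^sub>m M) (p ^ (m + 1))}"
proof (intro equalityI subsetI)
  fix X assume "X \<in> {X \<in> Gamma n (p ^ m). mat_cong X (1\<^sub>m n + of_nat (p ^ m) \<cdot>\<^sub>m M) (p ^ (m + 1))}"
  thus "X \<in> {Y \<in> SL n. mat_cong Y (1\<^sub>m n + of_nat (p ^ m) \<cdot>\<^sub>m M) (p ^ (m + 1))}"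
    using Gamma_SL by blast
next
  fix Y assume Y: "Y \<in> {Y \<in> SL n. mat_cong Y (1\<^sub>m n + of_nat (p ^ m) \<cdot>\<^sub>m M) (p ^ (m + 1))}"
  have "p ^ m dvd p ^ (m + 1)" by simp
  hence "Y \<in> Gamma n (p ^ m)"
    using Gamma_from_cong[of Y n "1\<^sub>m n + of_nat (p ^ m) \<cdot>\<^sub>m M" "p ^ (m + 1)" "p ^ m"] Y M one_plus_cong[OF M]
    by simp
  thus "Y \<in> {X \<in> Gamma n (p ^ m). mat_cong X (1\<^sub>m n + of_nat (p ^ m) \<cdot>\<^sub>m M) (p ^ (m + 1))}"
    using Y by simp
qed

theorem proposition4p5:
  fixes v :: "'i \<Rightarrow> 'a::comm_ring_1" and n p r :: nat
  assumes "free_Z_basis v"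
    and "n \<ge> 2" and "prime p" and "r \<ge> 1" and "p \<noteq> 2 \<or> r > 1"
  shows "\<exists>\<psi>. (\<forall>X\<in>Gamma n (p ^ r).
               \<psi> (Gamma n (p ^ (r + 1)) #>\<^bsub>Gamma_group n (p ^ r)\<^esub> X)
                 = Gamma n (p ^ (r + 2)) #>\<^bsub>Gamma_group n (p ^ (r + 1))\<^esub> (X ^\<^sub>m p))
            \<and> \<psi> \<in> iso (Gamma_quot n p r) (Gamma_quot n p (r + 1))
            \<and> (\<forall>i<n. \<forall>j<n. \<forall>k. (i + 1) + (j + 1) < 2 * n \<longrightarrow>
                 \<psi> (A_elem n p v i j k r) = A_elem n p v i j k (r + 1))"
proof -
  note fb = assms(1) and p = assms(3) and r = assms(4) and pr = assms(5)
  have n1: "n \<ge> 1" using assms(2) by simp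
  have r2: "r + 1 + 1 = r + 2" by simp
  define cls0 :: "'a mat \<Rightarrow> 'a mat set" where "cls0 X = Gamma n (p ^ (r + 1)) #>\<^bsub>Gamma_group n (p ^ r)\<^esub> X" for X
  define cls1 :: "'a mat \<Rightarrow> 'a mat set" where "cls1 X = Gamma n (p ^ (r + 2)) #>\<^bsub>Gamma_group n (p ^ (r + 1))\<^esub> X" for X
  have cls0_eq: "cls0 X = {Y \<in> SL n. mat_cong Y X (p ^ (r + 1))}" if "X \<in> SL n" for X
    unfolding cls0_def by (rule Gamma_coset[OF that])
  have cls1_eq: "cls1 X = {Y \<in> SL n. mat_cong Y X (p ^ (r + 2))}" if "X \<in> SL n" for X
    unfolding cls1_def by (rule Gamma_coset[OF that])
  have G0: "mat_cong X (1\<^sub>m n) (p ^ r)" "X \<in> SL n" "X \<in> carrier_mat n n" if "X \<in> Gamma n (p ^ r)" for X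
    using that by (auto simp: Gamma_def SL_def)
  define \<psi> where "\<psi> C = cls1 ((SOME X. X \<in> C) ^\<^sub>m p)" for C
  have K1: "\<psi> (cls0 X) = cls1 (X ^\<^sub>m p)" if X: "X \<in> Gamma n (p ^ r)" for X
  proof -
    have "X \<in> cls0 X" using G0[OF X] by (simp add: cls0_eq mc_refl)
    hence "(SOME Y. Y \<in> cls0 X) \<in> cls0 X" by (rule someI)
    then obtain X' where X': "X' = (SOME Y. Y \<in> cls0 X)" "X' \<in> SL n" "mat_cong X' X (p ^ (r + 1))"
      using G0[OF X] by (simp add: cls0_eq)
    have X'G: "X' \<in> Gamma n (p ^ r)"
      by (rule Gamma_from_cong[OF X'(2) G0(3)[OF X] X'(3) _ G0(1)[OF X]]) auto
    have cc: "mat_cong (X' ^\<^sub>m p) (X ^\<^sub>m p) (p ^ (r + 2))"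
      using pow_cong_iff[OF fb G0(3)[OF X'G] G0(3)[OF X] G0(1)[OF X'G] G0(1)[OF X] p r pr] X'(3) by simp
    have "cls1 (X' ^\<^sub>m p) = {Y \<in> SL n. mat_cong Y (X' ^\<^sub>m p) (p ^ (r + 2))}"
      by (rule cls1_eq[OF SL_pow[OF X'(2)]])
    also have "\<dots> = {Y \<in> SL n. mat_cong Y (X ^\<^sub>m p) (p ^ (r + 2))}"
      by (rule cls_eq[OF pow_carrier_mat[OF G0(3)[OF X'G]] pow_carrier_mat[OF G0(3)[OF X]] cc])
    also have "\<dots> = cls1 (X ^\<^sub>m p)" by (rule cls1_eq[OF SL_pow[OF G0(2)[OF X]], symmetric])
    finally have "cls1 (X' ^\<^sub>m p) = cls1 (X ^\<^sub>m p)" .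
    thus ?thesis unfolding \<psi>_def X'(1) .
  qed
  have powG: "X ^\<^sub>m p \<in> Gamma n (p ^ (r + 1))" if "X \<in> Gamma n (p ^ r)" for X
    by (rule pow_Gamma[OF that p r pr])
  have cQ0: "carrier (Gamma_quot n p r :: 'a mat set monoid) = cls0 ` Gamma n (p ^ r)"
    unfolding Gamma_quot_def FactGroup_def RCOSETS_def cls0_def by (auto simp: Gamma_group_def)
  have cQ1: "carrier (Gamma_quot n p (r + 1) :: 'a mat set monoid) = cls1 ` Gamma n (p ^ (r + 1))"
    unfolding Gamma_quot_def FactGroup_def RCOSETS_def cls1_def by (auto simp: Gamma_group_def)
  have mQ0: "mult (Gamma_quot n p r :: 'a mat set monoid) = set_mult (Gamma_group n (p ^ r))"
    unfolding Gamma_quot_def FactGroup_def by simp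
  have mQ1: "mult (Gamma_quot n p (r + 1) :: 'a mat set monoid) = set_mult (Gamma_group n (p ^ (r + 1)))"
    unfolding Gamma_quot_def FactGroup_def by simp
  have N0: "Gamma n (p ^ (r + 1)) \<lhd> (Gamma_group n (p ^ r) :: 'a mat monoid)"
    by (rule Gamma_normal) (simp add: power_add)
  have N1: "Gamma n (p ^ (r + 2)) \<lhd> (Gamma_group n (p ^ (r + 1)) :: 'a mat monoid)"
    by (rule Gamma_normal) (simp add: le_imp_power_dvd)
  have sum0: "cls0 X <#>\<^bsub>Gamma_group n (p ^ r)\<^esub> cls0 Y = cls0 (X * Y)"
    if "X \<in> Gamma n (p ^ r)" "Y \<in> Gamma n (p ^ r)" for X Y
    using normal.rcos_sum[OF N0, of X Y] that unfolding cls0_def by (simp add: Gamma_group_def)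
  have sum1: "cls1 X <#>\<^bsub>Gamma_group n (p ^ (r + 1))\<^esub> cls1 Y = cls1 (X * Y)"
    if "X \<in> Gamma n (p ^ (r + 1))" "Y \<in> Gamma n (p ^ (r + 1))" for X Y
    using normal.rcos_sum[OF N1, of X Y] that unfolding cls1_def by (simp add: Gamma_group_def)
  have hom: "\<psi> \<in> hom (Gamma_quot n p r :: 'a mat set monoid) (Gamma_quot n p (r + 1) :: 'a mat set monoid)"
  proof (rule homI)
    fix C assume "C \<in> carrier (Gamma_quot n p r :: 'a mat set monoid)"
    then obtain X where X: "X \<in> Gamma n (p ^ r)" "C = cls0 X" unfolding cQ0 by auto
    show "\<psi> C \<in> carrier (Gamma_quot n p (r + 1) :: 'a mat set monoid)" unfolding cQ1 X(2) K1[OF X(1)] using powG[OF X(1)] by auto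
  next
    fix C D assume "C \<in> carrier (Gamma_quot n p r :: 'a mat set monoid)" "D \<in> carrier (Gamma_quot n p r :: 'a mat set monoid)"
    then obtain X Y where X: "X \<in> Gamma n (p ^ r)" "C = cls0 X" and Y: "Y \<in> Gamma n (p ^ r)" "D = cls0 Y"
      unfolding cQ0 by auto
    have XY: "X * Y \<in> Gamma n (p ^ r)" by (rule Gamma_mult[OF X(1) Y(1)])
    have cc: "mat_cong ((X * Y) ^\<^sub>m p) (X ^\<^sub>m p * Y ^\<^sub>m p) (p ^ (r + 2))"
      by (rule mult_pow_cong[OF G0(3)[OF X(1)] G0(3)[OF Y(1)] G0(1)[OF X(1)] G0(1)[OF Y(1)] p r pr])
    have C: "(X * Y) ^\<^sub>m p \<in> carrier_mat n n" "X ^\<^sub>m p * Y ^\<^sub>m p \<in> carrier_mat n n"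
      using G0(3)[OF X(1)] G0(3)[OF Y(1)] by auto
    have S: "(X * Y) ^\<^sub>m p \<in> SL n" "X ^\<^sub>m p * Y ^\<^sub>m p \<in> SL n"
      using SL_pow[OF G0(2)[OF XY]] SL_mult[OF SL_pow[OF G0(2)[OF X(1)]] SL_pow[OF G0(2)[OF Y(1)]]] by auto
    have e: "cls1 ((X * Y) ^\<^sub>m p) = cls1 (X ^\<^sub>m p * Y ^\<^sub>m p)"
      unfolding cls1_eq[OF S(1)] cls1_eq[OF S(2)] by (rule cls_eq[OF C cc])
    show "\<psi> (C \<otimes>\<^bsub>Gamma_quot n p r :: 'a mat set monoid\<^esub> D) = \<psi> C \<otimes>\<^bsub>Gamma_quot n p (r + 1) :: 'a mat set monoid\<^esub> \<psi> D"
      unfolding mQ0 mQ1 X(2) Y(2) sum0[OF X(1) Y(1)] K1[OF XY] K1[OF X(1)] K1[OF Y(1)]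
        sum1[OF powG[OF X(1)] powG[OF Y(1)]] e ..
  qed
  have inj: "inj_on \<psi> (carrier (Gamma_quot n p r :: 'a mat set monoid))"
  proof (rule inj_onI)
    fix C D assume "C \<in> carrier (Gamma_quot n p r :: 'a mat set monoid)" "D \<in> carrier (Gamma_quot n p r :: 'a mat set monoid)" and e: "\<psi> C = \<psi> D"
    then obtain X Y where X: "X \<in> Gamma n (p ^ r)" "C = cls0 X" and Y: "Y \<in> Gamma n (p ^ r)" "D = cls0 Y"
      unfolding cQ0 by auto
    have "cls1 (X ^\<^sub>m p) = cls1 (Y ^\<^sub>m p)" using e unfolding X(2) Y(2) K1[OF X(1)] K1[OF Y(1)] .
    moreover have "X ^\<^sub>m p \<in> cls1 (X ^\<^sub>m p)" using SL_pow[OF G0(2)[OF X(1)]] by (simp add: cls1_eq mc_refl)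
    ultimately have "X ^\<^sub>m p \<in> cls1 (Y ^\<^sub>m p)" by simp
    hence "mat_cong (X ^\<^sub>m p) (Y ^\<^sub>m p) (p ^ (r + 2))" using SL_pow[OF G0(2)[OF Y(1)]] by (simp add: cls1_eq)
    hence c: "mat_cong X Y (p ^ (r + 1))"
      using pow_cong_iff[OF fb G0(3)[OF X(1)] G0(3)[OF Y(1)] G0(1)[OF X(1)] G0(1)[OF Y(1)] p r pr] by simp
    show "C = D" unfolding X(2) Y(2) cls0_eq[OF G0(2)[OF X(1)]] cls0_eq[OF G0(2)[OF Y(1)]]
      by (rule cls_eq[OF G0(3)[OF X(1)] G0(3)[OF Y(1)] c])
  qed
  have surj: "\<psi> ` carrier (Gamma_quot n p r :: 'a mat set monoid) = carrier (Gamma_quot n p (r + 1) :: 'a mat set monoid)"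
  proof (intro equalityI subsetI)
    fix D assume "D \<in> \<psi> ` carrier (Gamma_quot n p r :: 'a mat set monoid)"
    thus "D \<in> carrier (Gamma_quot n p (r + 1) :: 'a mat set monoid)" using hom unfolding hom_def by auto
  next
    fix D assume "D \<in> carrier (Gamma_quot n p (r + 1) :: 'a mat set monoid)"
    then obtain Y where Y: "Y \<in> Gamma n (p ^ (r + 1))" "D = cls1 Y" unfolding cQ1 by auto
    obtain X where X: "X \<in> Gamma n (p ^ r)" and c: "mat_cong (X ^\<^sub>m p) Y (p ^ (r + 2))"
      using surj_lemma[OF fb n1 p r pr Y(1)] by auto
    have "cls1 (X ^\<^sub>m p) = cls1 Y"
      unfolding cls1_eq[OF SL_pow[OF G0(2)[OF X]]] cls1_eq[OF Gamma_SL[OF Y(1)]]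
      by (rule cls_eq[OF pow_carrier_mat[OF G0(3)[OF X]] Gamma_carrier[OF Y(1)] c])
    hence "D = \<psi> (cls0 X)" unfolding Y(2) K1[OF X] by simp
    thus "D \<in> \<psi> ` carrier (Gamma_quot n p r :: 'a mat set monoid)" unfolding cQ0 using X by auto
  qed
  have iso: "\<psi> \<in> iso (Gamma_quot n p r :: 'a mat set monoid) (Gamma_quot n p (r + 1) :: 'a mat set monoid)"
    unfolding iso_def bij_betw_def using hom inj surj by auto
  have Ael: "\<psi> (A_elem n p v i j k r) = A_elem n p v i j k (r + 1)" if ij: "i < n" "j < n" for i j k
  proof -
    let ?M = "v k \<cdot>\<^sub>m Emat n i j"
    have Mc: "?M \<in> carrier_mat n n" by simp
    have "?M \<in> Lset n p r" by (rule Emat_Lset[OF ij r])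
    then obtain X0 where X0: "X0 \<in> SL n" and cX0: "mat_cong X0 (1\<^sub>m n + of_nat (p ^ r) \<cdot>\<^sub>m ?M) (p ^ (r + 1))"
      unfolding Lset_def by auto
    have X0G: "X0 \<in> Gamma n (p ^ r)" by (rule PL(1)[OF X0 Mc cX0 p r pr])
    have cP: "mat_cong (X0 ^\<^sub>m p) (1\<^sub>m n + of_nat (p ^ (r + 1)) \<cdot>\<^sub>m ?M) (p ^ (r + 2))"
      by (rule PL(2)[OF X0 Mc cX0 p r pr])
    have A0c: "1\<^sub>m n + of_nat (p ^ r) \<cdot>\<^sub>m ?M \<in> carrier_mat n n" by simp
    have A1c: "1\<^sub>m n + of_nat (p ^ (r + 1)) \<cdot>\<^sub>m ?M \<in> carrier_mat n n" by simp
    have e0: "A_elem n p v i j k r = cls0 X0"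
    proof -
      have "A_elem n p v i j k r = {Y \<in> SL n. mat_cong Y (1\<^sub>m n + of_nat (p ^ r) \<cdot>\<^sub>m ?M) (p ^ (r + 1))}"
        unfolding A_elem_def A_mat_eq by (rule AE_set[OF Mc])
      also have "\<dots> = {Y \<in> SL n. mat_cong Y X0 (p ^ (r + 1))}"
        by (rule cls_eq[OF A0c SL_carrier[OF X0]]) (rule mc_sym[OF SL_carrier[OF X0] A0c cX0])
      finally show ?thesis using cls0_eq[OF X0] by simp
    qed
    have e1: "A_elem n p v i j k (r + 1) = cls1 (X0 ^\<^sub>m p)"
    proof -
      have "A_elem n p v i j k (r + 1) = {Y \<in> SL n. mat_cong Y (1\<^sub>m n + of_nat (p ^ (r + 1)) \<cdot>\<^sub>m ?M) (p ^ (r + 2))}"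
        unfolding A_elem_def A_mat_eq using AE_set[OF Mc, of p "r + 1"] by (simp add: r2)
      also have "\<dots> = {Y \<in> SL n. mat_cong Y (X0 ^\<^sub>m p) (p ^ (r + 2))}"
        by (rule cls_eq[OF A1c _ mc_sym[OF _ A1c cP]]) (use SL_carrier[OF X0] in auto)
      finally show ?thesis using cls1_eq[OF SL_pow[OF X0]] by simp
    qed
    show ?thesis unfolding e0 e1 K1[OF X0G] ..
  qed
  have K1': "\<forall>X\<in>Gamma n (p ^ r).
               \<psi> (Gamma n (p ^ (r + 1)) #>\<^bsub>Gamma_group n (p ^ r)\<^esub> X)
                 = Gamma n (p ^ (r + 2)) #>\<^bsub>Gamma_group n (p ^ (r + 1))\<^esub> (X ^\<^sub>m p)"
    using K1 unfolding cls0_def cls1_def by blast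
  show ?thesis
    by (rule exI[of _ \<psi>], intro conjI K1' iso allI impI Ael) auto
qed


end
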